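(* Let $n,m\ge1$, $\vec v\in\hat N^n$, $\vec w\in\hat N^m$, and define $\vec v\nearrow\vec w=(v_1,\dots,v_n,\ n\triangleright w_1,\dots,n\triangleright w_m)$ and $\vec v\nwarrow\vec w=(v_1,\dots,v_n,\ w_1+n,\dots,w_m+n)$, where $n\triangleright a=a+n$ if $a\neq1$ and $n\triangleright 1=1$. Then: (i) $\vec v\nearrow\vec w,\ \vec v\nwarrow\vec w\in\hat N^{n+m}$, and for trees $\pi,\tau$ one has $\mathrm{name}(\pi\nearrow\tau)=\mathrm{name}(\pi)\nearrow\mathrm{name}(\tau)$ and $\mathrm{name}(\pi\nwarrow\tau)=\mathrm{name}(\pi)\nwarrow\mathrm{name}(\tau)$; (ii) both operations are associative on $\bigcup_{n\ge1}\hat N^n$ and satisfy $(\vec u\nearrow\vec v)\nwarrow\vec w=\vec u\nearrow(\vec v\nwarrow\vec w)$; hence, extended bilinearly, they make $\bigoplus_{n\ge1}K\hat N^n$ an associative $L$-algebra, and $\mathrm{name}$ (extended linearly) is an isomorphism of associative $L$-algebras from $\bigoplus_{n\ge1}KY_n$ (with the tree operations) onto it; (iii) $M(\vec v\nearrow\vec w)=M(\vec v)M(\vec w)$, and $M(\vec v\nwarrow\vec w)=(-1)^mM(\vec v)$ if $\vec w=(1,2,\dots,m)$, while $M(\vec v\nwarrow\vec w)=0$ otherwise.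
   Context: $K$ is a field of characteristic zero. $Y_n$ is the set of planar rooted binary trees with $n$ internal vertices ($n+1$ leaves) up to isotopy. For trees $\pi,\tau$ with at least one internal vertex, $\pi\nearrow\tau$ ("over") is the tree $\tau$ with its leftmost leaf identified with the root of $\pi$, and $\pi\nwarrow\tau$ ("under") is the tree $\pi$ with its rightmost leaf identified with the root of $\tau$. A complete expression in $x_1,\dots,x_{n+1}$ is a full binary parenthesization of $x_1\cdots x_{n+1}$ (every product of two factors, including the outermost, in parentheses); trees correspond bijectively to complete expressions via $|\mapsto x_1$, $\tau_1\vee\tau_2\mapsto(E_1E_2)$ with consecutive relabelling, $\tau_1\vee\tau_2$ being the tree with new root, left subtree $\tau_1$, right subtree $\tau_2$. The name of $\tau\in Y_n$ is the vector $\vec v\in\mathbb N^n$ with $v_i=i$ if at least one left parenthesis stands immediately left of $x_i$ in the complete expression; otherwise the rightmost of the right parentheses immediately following $x_i$ matches a left parenthesis in the run immediately preceding some $x_j$, and $v_i=j$. $\hat N^n$ is the set of names of trees of $Y_n$. An associative $L$-algebra is a vector space with two associative bilinear products $\nearrow,\nwarrow$ satisfying $(x\nearrow y)\nwarrow z=x\nearrow(y\nwarrow z)$. $M(\vec v)=\mu((1,\dots,1),\vec v)$ where $\mu$ is the Möbius function of $\hat N^n$ with the componentwise order ($\vec v\le\vec w$ iff $v_i\le w_i$ for all $i$). *)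

theory Defs
  imports Main
begin

datatype tree = Leaf | Node tree tree

fun internal :: "tree \<Rightarrow> nat" where
  "internal Leaf = 0"
| "internal (Node l r) = Suc (internal l + internal r)"

definition nleaves :: "tree \<Rightarrow> nat" where
  "nleaves t = internal t + 1"

definition Y :: "nat \<Rightarrow> tree set" where
  "Y n = {t. internal t = n}"

fun over :: "tree \<Rightarrow> tree \<Rightarrow> tree" where
  "over p Leaf = p"
| "over p (Node l r) = Node (over p l) r"

fun under :: "tree \<Rightarrow> tree \<Rightarrow> tree" where
  "under Leaf t = t"
| "under (Node l r) t = Node l (under r t)"

datatype tok = LP | RP | X nat

fun is_X :: "tok \<Rightarrow> bool" where
  "is_X (X _) = True"
| "is_X _ = False"

fun var_of :: "tok \<Rightarrow> nat" where
  "var_of (X i) = i"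
| "var_of _ = 0"

fun expr :: "tree \<Rightarrow> nat \<Rightarrow> tok list" where
  "expr Leaf k = [X k]"
| "expr (Node l r) k = [LP] @ expr l k @ expr r (k + nleaves l) @ [RP]"

definition cexpr :: "tree \<Rightarrow> tok list" where
  "cexpr t = expr t 1"

definition balanced_seg :: "tok list \<Rightarrow> nat \<Rightarrow> nat \<Rightarrow> bool" where
  "balanced_seg ts a b =
     (let s = take (b - a + 1) (drop a ts)
      in length (filter (\<lambda>x. x = LP) s) = length (filter (\<lambda>x. x = RP) s))"

text \<open>Position (0-based) of the left parenthesis matching the right parenthesis at position q.\<close>
definition match_lp :: "tok list \<Rightarrow> nat \<Rightarrow> nat" where
  "match_lp ts q = (GREATEST q'. q' < q \<and> ts ! q' = LP \<and> balanced_seg ts q' q)"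

definition name_comp :: "tok list \<Rightarrow> nat \<Rightarrow> nat" where
  "name_comp ts i =
     (let p = (THE p. p < length ts \<and> ts ! p = X i) in
      if 0 < p \<and> ts ! (p - 1) = LP then i
      else
        (let q = (GREATEST q. q < length ts \<and> p < q \<and> (\<forall>k. p < k \<and> k \<le> q \<longrightarrow> ts ! k = RP));
             q' = match_lp ts q;
             r = (LEAST r. q' < r \<and> r < length ts \<and> is_X (ts ! r))
         in var_of (ts ! r)))"

definition name :: "tree \<Rightarrow> nat list" where
  "name t = map (name_comp (cexpr t)) [1..<internal t + 1]"

definition Nhat :: "nat \<Rightarrow> nat list set" where
  "Nhat n = name ` Y n"

definition NhatAll :: "nat list set" where
  "NhatAll = (\<Union>n\<in>{1..}. Nhat n)"

definition tri :: "nat \<Rightarrow> nat \<Rightarrow> nat" where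
  "tri n a = (if a = 1 then 1 else a + n)"

definition over_name :: "nat list \<Rightarrow> nat list \<Rightarrow> nat list" where
  "over_name v w = v @ map (tri (length v)) w"

definition under_name :: "nat list \<Rightarrow> nat list \<Rightarrow> nat list" where
  "under_name v w = v @ map (\<lambda>a. a + length v) w"

definition le_vec :: "nat list \<Rightarrow> nat list \<Rightarrow> bool" where
  "le_vec v w = (length v = length w \<and> (\<forall>i<length v. v ! i \<le> w ! i))"

definition mobius :: "'a set \<Rightarrow> ('a \<Rightarrow> 'a \<Rightarrow> bool) \<Rightarrow> 'a \<Rightarrow> 'a \<Rightarrow> int" where
  "mobius P le =
     (THE f. \<forall>a b. f a b =
        (if a \<in> P \<and> b \<in> P \<and> le a b then
           (if a = b then 1 else - (\<Sum>z\<in>{z\<in>P. le a z \<and> le z b \<and> z \<noteq> b}. f a z))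
         else 0))"

definition M :: "nat list \<Rightarrow> int" where
  "M v = mobius (Nhat (length v)) le_vec (replicate (length v) 1) v"

text \<open>The vector space with basis B over K: finitely supported functions with support in B.\<close>
definition free_on :: "'a set \<Rightarrow> ('a \<Rightarrow> 'k::field) set" where
  "free_on B = {f. finite {a. f a \<noteq> 0} \<and> {a. f a \<noteq> 0} \<subseteq> B}"

definition bilin_ext :: "('a \<Rightarrow> 'a \<Rightarrow> 'a) \<Rightarrow> ('a \<Rightarrow> 'k::field) \<Rightarrow> ('a \<Rightarrow> 'k) \<Rightarrow> ('a \<Rightarrow> 'k)" where
  "bilin_ext op f g = (\<lambda>c. \<Sum>(a, b)\<in>{(a, b). f a \<noteq> 0 \<and> g b \<noteq> 0 \<and> op a b = c}. f a * g b)"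

definition lin_ext :: "('a \<Rightarrow> 'b) \<Rightarrow> ('a \<Rightarrow> 'k::field) \<Rightarrow> ('b \<Rightarrow> 'k)" where
  "lin_ext \<phi> f = (\<lambda>c. \<Sum>a\<in>{a. f a \<noteq> 0 \<and> \<phi> a = c}. f a)"

definition subspace_fun :: "('a \<Rightarrow> 'k::field) set \<Rightarrow> bool" where
  "subspace_fun V \<longleftrightarrow> (\<lambda>_. 0) \<in> V \<and> (\<forall>f\<in>V. \<forall>g\<in>V. (\<lambda>x. f x + g x) \<in> V)
      \<and> (\<forall>c. \<forall>f\<in>V. (\<lambda>x. c * f x) \<in> V)"

definition bilinear_on :: "('a \<Rightarrow> 'k::field) set \<Rightarrow> (('a \<Rightarrow> 'k) \<Rightarrow> ('a \<Rightarrow> 'k) \<Rightarrow> ('a \<Rightarrow> 'k)) \<Rightarrow> bool" where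
  "bilinear_on V op \<longleftrightarrow>
     (\<forall>f\<in>V. \<forall>g\<in>V. op f g \<in> V) \<and>
     (\<forall>f\<in>V. \<forall>g\<in>V. \<forall>h\<in>V. op (\<lambda>x. f x + g x) h = (\<lambda>x. op f h x + op g h x)
                         \<and> op h (\<lambda>x. f x + g x) = (\<lambda>x. op h f x + op h g x)) \<and>
     (\<forall>c. \<forall>f\<in>V. \<forall>g\<in>V. op (\<lambda>x. c * f x) g = (\<lambda>x. c * op f g x)
                       \<and> op f (\<lambda>x. c * g x) = (\<lambda>x. c * op f g x))"

definition assoc_L_algebra :: "('a \<Rightarrow> 'k::field) set \<Rightarrow> (('a \<Rightarrow> 'k) \<Rightarrow> ('a \<Rightarrow> 'k) \<Rightarrow> ('a \<Rightarrow> 'k))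
    \<Rightarrow> (('a \<Rightarrow> 'k) \<Rightarrow> ('a \<Rightarrow> 'k) \<Rightarrow> ('a \<Rightarrow> 'k)) \<Rightarrow> bool" where
  "assoc_L_algebra V ov un \<longleftrightarrow>
     subspace_fun V \<and> bilinear_on V ov \<and> bilinear_on V un \<and>
     (\<forall>f\<in>V. \<forall>g\<in>V. \<forall>h\<in>V. ov (ov f g) h = ov f (ov g h)) \<and>
     (\<forall>f\<in>V. \<forall>g\<in>V. \<forall>h\<in>V. un (un f g) h = un f (un g h)) \<and>
     (\<forall>f\<in>V. \<forall>g\<in>V. \<forall>h\<in>V. un (ov f g) h = ov f (un g h))"

definition L_alg_iso :: "('a \<Rightarrow> 'k::field) set \<Rightarrow> (('a \<Rightarrow> 'k) \<Rightarrow> ('a \<Rightarrow> 'k) \<Rightarrow> ('a \<Rightarrow> 'k))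
    \<Rightarrow> (('a \<Rightarrow> 'k) \<Rightarrow> ('a \<Rightarrow> 'k) \<Rightarrow> ('a \<Rightarrow> 'k))
    \<Rightarrow> ('b \<Rightarrow> 'k) set \<Rightarrow> (('b \<Rightarrow> 'k) \<Rightarrow> ('b \<Rightarrow> 'k) \<Rightarrow> ('b \<Rightarrow> 'k))
    \<Rightarrow> (('b \<Rightarrow> 'k) \<Rightarrow> ('b \<Rightarrow> 'k) \<Rightarrow> ('b \<Rightarrow> 'k))
    \<Rightarrow> (('a \<Rightarrow> 'k) \<Rightarrow> ('b \<Rightarrow> 'k)) \<Rightarrow> bool" where
  "L_alg_iso V ov un W ov' un' \<phi> \<longleftrightarrow>
     assoc_L_algebra V ov un \<and> assoc_L_algebra W ov' un' \<and>
     bij_betw \<phi> V W \<and>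
     (\<forall>f\<in>V. \<forall>g\<in>V. \<phi> (\<lambda>x. f x + g x) = (\<lambda>y. \<phi> f y + \<phi> g y)) \<and>
     (\<forall>c. \<forall>f\<in>V. \<phi> (\<lambda>x. c * f x) = (\<lambda>y. c * \<phi> f y)) \<and>
     (\<forall>f\<in>V. \<forall>g\<in>V. \<phi> (ov f g) = ov' (\<phi> f) (\<phi> g)) \<and>
     (\<forall>f\<in>V. \<forall>g\<in>V. \<phi> (un f g) = un' (\<phi> f) (\<phi> g))"

end

theory Submission
  imports Defs
begin


fun nm :: "tree \<Rightarrow> nat \<Rightarrow> nat list" where
  "nm Leaf k = []"
| "nm (Node l r) k = nm l k @ [k] @ nm r (k + internal l + 1)"

lemma length_nm[simp]: "length (nm t k) = internal t"
  by (induction t arbitrary: k) auto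

lemma nm_shift: "nm t (k + d) = map (\<lambda>a. a + d) (nm t k)"
proof (induction t arbitrary: k)
  case Leaf then show ?case by simp
next
  case (Node l r)
  have "nm r (k + d + internal l + 1) = nm r ((k + internal l + 1) + d)" by (simp add: algebra_simps)
  then show ?case using Node.IH(1)[of k] Node.IH(2)[of "k + internal l + 1"] by simp
qed

lemma internal0[simp]: "internal t = 0 \<longleftrightarrow> t = Leaf"
  by (cases t) auto

lemma nm_bounds: "p < internal t \<Longrightarrow> k \<le> nm t k ! p \<and> nm t k ! p \<le> k + p"
proof (induction t arbitrary: k p)
  case Leaf then show ?case by simp
next
  case (Node l r)
  show ?case
  proof (cases "p < internal l")
    case True then show ?thesis using Node.IH(1)[of p k] by (simp add: nth_append)
  next
    case False
    show ?thesis
    proof (cases "p = internal l")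
      case True then show ?thesis by (simp add: nth_append)
    next
      case False
      with \<open>\<not> p < internal l\<close> have "p - internal l - 1 < internal r" using Node.prems by simp
      from Node.IH(2)[OF this, of "k + internal l + 1"] False \<open>\<not> p < internal l\<close>
      show ?thesis by (simp add: nth_append)
    qed
  qed
qed

lemma nm_set: "a \<in> set (nm t k) \<Longrightarrow> k \<le> a"
  using nm_bounds[of _ t k] by (auto simp: in_set_conv_nth)

lemma nm_hd: "t \<noteq> Leaf \<Longrightarrow> nm t k ! 0 = k"
proof (induction t arbitrary: k)
  case Leaf then show ?case by simp
next
  case (Node l r)
  then show ?case by (cases "l = Leaf") (auto simp: nth_append)
qed

lemma nm_leftcomb: "(\<And>p. 0 < p \<Longrightarrow> p < internal t \<Longrightarrow> nm t k ! p \<noteq> k + p) \<Longrightarrow> nm t k = replicate (internal t) k"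
proof (induction t arbitrary: k)
  case Leaf then show ?case by simp
next
  case (Node l r)
  have rL: "r = Leaf"
  proof (rule ccontr)
    assume "r \<noteq> Leaf"
    then have "nm (Node l r) k ! (internal l + 1) = k + (internal l + 1)"
      using nm_hd[of r "k + internal l + 1"] by (simp add: nth_append)
    with Node.prems[of "internal l + 1"] \<open>r \<noteq> Leaf\<close> show False by (cases r) auto
  qed
  have "nm l k = replicate (internal l) k"
    using Node.prems[of p] rL by (intro Node.IH(1)) (metis Node.prems internal.simps length_nm less_SucI nm.simps nth_append add_0_right)
  then show ?case using rL by (simp add: replicate_app_Cons_same)
qed

lemma app_split_uniq: "xs @ [x] @ ys = xs' @ [x] @ ys' \<Longrightarrow> x \<notin> set ys \<Longrightarrow> x \<notin> set ys' \<Longrightarrow> xs = xs' \<and> ys = ys'"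
proof (induction xs arbitrary: xs')
  case Nil then show ?case by (cases xs') auto
next
  case (Cons a xs)
  then show ?case by (cases xs') auto
qed

lemma nm_inj: "nm t k = nm t' k \<Longrightarrow> t = t'"
proof (induction t arbitrary: t' k)
  case Leaf then show ?case by (cases t') auto
next
  case (Node l r)
  then obtain l' r' where t': "t' = Node l' r'" by (cases t') auto
  have ns: "k \<notin> set (nm r (k + internal l + 1))" "k \<notin> set (nm r' (k + internal l' + 1))"
    using nm_set by fastforce+
  from Node.prems t' have "nm l k @ [k] @ nm r (k + internal l + 1) = nm l' k @ [k] @ nm r' (k + internal l' + 1)" by simp
  from app_split_uniq[OF this ns] have e: "nm l k = nm l' k" "nm r (k + internal l + 1) = nm r' (k + internal l' + 1)" by auto
  then have "internal l = internal l'" by (metis length_nm)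
  with e Node.IH show ?case using t' by auto
qed

lemma internal_over[simp]: "internal (over p t) = internal p + internal t"
  by (induction t) auto
lemma internal_under[simp]: "internal (under p t) = internal p + internal t"
  by (induction p) auto

lemma nm_over: "nm (over p t) k = nm p k @ map (\<lambda>a. if a = k then k else a + internal p) (nm t k)"
proof (induction t arbitrary: k)
  case Leaf then show ?case by simp
next
  case (Node l r)
  have "map (\<lambda>a. if a = k then k else a + internal p) (nm r (k + internal l + 1)) = map (\<lambda>a. a + internal p) (nm r (k + internal l + 1))"
    using nm_set[of _ r "k + internal l + 1"] by (intro map_cong) (auto dest!: nm_set)
  also have "\<dots> = nm r (k + (internal p + internal l) + 1)"
    using nm_shift[of r "k + internal l + 1" "internal p"] by (simp add: algebra_simps)
  finally show ?case using Node by simp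
qed

lemma nm_under: "nm (under p t) k = nm p k @ map (\<lambda>a. a + internal p) (nm t k)"
proof (induction p arbitrary: k)
  case Leaf then show ?case by simp
next
  case (Node l r)
  then show ?case using nm_shift[of t k "Suc (internal l + internal r)"] nm_shift[of t "k + internal l + 1" "internal r"]
    by (simp add: algebra_simps)
qed



lemma nleaves_simp[simp]: "nleaves t = internal t + 1" by (simp add: nleaves_def)

lemma expr_X_set: "X i \<in> set (expr t k) \<longleftrightarrow> k \<le> i \<and> i \<le> k + internal t"
  by (induction t arbitrary: k) auto

lemma expr_ne[simp]: "expr t k \<noteq> []"
  by (cases t) auto

lemma expr_hd: "expr t k ! 0 \<noteq> RP"
  by (cases t) auto

lemma expr_last: "last (expr t k) \<noteq> LP"
  by (cases t) auto

fun rs :: "tree \<Rightarrow> nat" where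
  "rs Leaf = 0" | "rs (Node l r) = Suc (rs r)"

lemma expr_end: "\<exists>F. expr t k = F @ [X (k + internal t)] @ replicate (rs t) RP \<and> X (k + internal t) \<notin> set F
   \<and> (t \<noteq> Leaf \<longrightarrow> F \<noteq> [] \<and> last F \<noteq> LP)"
proof (induction t arbitrary: k)
  case Leaf then show ?case by simp
next
  case (Node l r)
  obtain F where F: "expr r (k + internal l + 1) = F @ [X (k + internal l + 1 + internal r)] @ replicate (rs r) RP"
     "X (k + internal l + 1 + internal r) \<notin> set F" "r \<noteq> Leaf \<longrightarrow> F \<noteq> [] \<and> last F \<noteq> LP"
    using Node.IH(2) by blast
  have Fr: "r = Leaf \<Longrightarrow> F = []" using F(1) by simp
  show ?case
  proof (intro exI[of _ "[LP] @ expr l k @ F"] conjI impI)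
    show "expr (Node l r) k = ([LP] @ expr l k @ F) @ [X (k + internal (Node l r))] @ replicate (rs (Node l r)) RP"
      using F(1) by (simp add: replicate_append_same[symmetric] algebra_simps)
    show "X (k + internal (Node l r)) \<notin> set ([LP] @ expr l k @ F)"
      using F(2) by (auto simp: expr_X_set algebra_simps)
    show "[LP] @ expr l k @ F \<noteq> []" by simp
    show "last ([LP] @ expr l k @ F) \<noteq> LP"
      using F(3) Fr expr_last[of l k] by (cases "F = []") auto
  qed
qed

lemma expr_start: "\<exists>j G. expr t k = replicate j LP @ [X k] @ G \<and> (t \<noteq> Leaf \<longrightarrow> 1 \<le> j)"
proof (induction t arbitrary: k)
  case Leaf then show ?case by (intro exI[of _ 0] exI[of _ "[]"]) simp
next
  case (Node l r)
  obtain j G where "expr l k = replicate j LP @ [X k] @ G" using Node.IH(1) by blast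
  then show ?case by (intro exI[of _ "Suc j"] exI[of _ "G @ expr r (k + internal l + 1) @ [RP]"]) simp
qed

abbreviation cLP :: "tok list \<Rightarrow> nat" where "cLP xs \<equiv> length (filter (\<lambda>x. x = LP) xs)"
abbreviation cRP :: "tok list \<Rightarrow> nat" where "cRP xs \<equiv> length (filter (\<lambda>x. x = RP) xs)"

lemma expr_cLP: "cLP (expr t k) = internal t"
  by (induction t arbitrary: k) auto
lemma expr_cRP: "cRP (expr t k) = internal t"
  by (induction t arbitrary: k) auto

lemma take_app_le: "j \<le> length xs \<Longrightarrow> take j (xs @ ys) = take j xs"
  by simp

lemma expr_prefix: "cRP (take j (expr t k)) \<le> cLP (take j (expr t k))"
proof (induction t arbitrary: j k)
  case Leaf then show ?case by (cases j) auto
next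
  case (Node l r)
  let ?A = "expr l k" and ?B = "expr r (k + internal l + 1)"
  show ?case
  proof (cases "j \<ge> length (expr (Node l r) k)")
    case True then show ?thesis using expr_cLP[of "Node l r" k] expr_cRP[of "Node l r" k] by simp
  next
    case False
    have e: "expr (Node l r) k = ([LP] @ ?A @ ?B) @ [RP]" by simp
    have "take j (expr (Node l r) k) = take j ([LP] @ ?A @ ?B)"
      unfolding e using False by (intro take_app_le) simp
    moreover have "cRP (take j ([LP] @ ?A @ ?B)) \<le> cLP (take j ([LP] @ ?A @ ?B))"
      using Node.IH(1)[of "j - 1" k] Node.IH(2)[of "j - 1 - length ?A" "k + internal l + 1"]
      by (cases j) auto
    ultimately show ?thesis by simp
  qed
qed

lemma expr_prefix_strict: "t \<noteq> Leaf \<Longrightarrow> 0 < j \<Longrightarrow> j < length (expr t k) \<Longrightarrow> cRP (take j (expr t k)) < cLP (take j (expr t k))"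
proof -
  assume "t \<noteq> Leaf" "0 < j" "j < length (expr t k)"
  then obtain l r where t: "t = Node l r" by (cases t) auto
  let ?A = "expr l k" and ?B = "expr r (k + internal l + 1)"
  have "take j (expr t k) = [LP] @ take (j - 1) (?A @ ?B)"
    using \<open>0 < j\<close> \<open>j < length (expr t k)\<close> t by (cases j) auto
  moreover have "cRP (take (j - 1) (?A @ ?B)) \<le> cLP (take (j - 1) (?A @ ?B))"
    using expr_prefix[of "j - 1" l k] expr_prefix[of "j - 1 - length ?A" r "k + internal l + 1"]
    by auto
  ultimately show ?thesis by simp
qed

lemma expr_suffix: "t \<noteq> Leaf \<Longrightarrow> 0 < j \<Longrightarrow> j < length (expr t k) \<Longrightarrow> cLP (drop j (expr t k)) \<noteq> cRP (drop j (expr t k))"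
proof -
  assume a: "t \<noteq> Leaf" "0 < j" "j < length (expr t k)"
  have "cLP (expr t k) = cLP (take j (expr t k)) + cLP (drop j (expr t k))"
    by (metis append_take_drop_id filter_append length_append)
  moreover have "cRP (expr t k) = cRP (take j (expr t k)) + cRP (drop j (expr t k))"
    by (metis append_take_drop_id filter_append length_append)
  ultimately show ?thesis using expr_prefix_strict[OF a] expr_cLP[of t k] expr_cRP[of t k] by linarith
qed

lemma the_pos: "xs = ys @ [x] @ zs \<Longrightarrow> x \<notin> set ys \<Longrightarrow> x \<notin> set zs \<Longrightarrow> (THE p. p < length xs \<and> xs ! p = x) = length ys"
proof -
  assume a: "xs = ys @ [x] @ zs" "x \<notin> set ys" "x \<notin> set zs"
  show ?thesis
  proof (rule the_equality)
    show "length ys < length xs \<and> xs ! length ys = x" using a by simp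
  next
    fix p assume p: "p < length xs \<and> xs ! p = x"
    show "p = length ys"
    proof (rule ccontr)
      assume "p \<noteq> length ys"
      then consider "p < length ys" | "p > length ys" by linarith
      then show False
      proof cases
        case 1 then show False using a p by (auto simp: nth_append)
      next
        case 2 then have "zs ! (p - length ys - 1) = x" "p - length ys - 1 < length zs" using a p by (auto simp: nth_append)
        then show False using a(3) nth_mem by metis
      qed
    qed
  qed
qed



lemma name_comp_direct:
  assumes ts: "ts = pre @ [LP] @ expr a k @ Rest"
    and Rest: "Rest = expr b k1 @ [RP] @ post"
    and k1: "k1 = k + internal a + 1"
    and pre: "\<forall>j. X j \<in> set pre \<longrightarrow> j < k"
    and post: "\<forall>j. X j \<in> set post \<longrightarrow> k + internal a < j"
  shows "name_comp ts (k + internal a) = k"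
proof -
  let ?i = "k + internal a"
  let ?E = "expr a k"
  obtain F where F: "?E = F @ [X ?i] @ replicate (rs a) RP" "X ?i \<notin> set F"
     "a \<noteq> Leaf \<longrightarrow> F \<noteq> [] \<and> last F \<noteq> LP"
    using expr_end by blast
  define P0 where "P0 = pre @ [LP] @ F"
  define R where "R = replicate (rs a) RP @ Rest"
  have tsP: "ts = P0 @ [X ?i] @ R" using ts F(1) by (simp add: P0_def R_def)
  have n1: "X ?i \<notin> set P0" using pre F(2) by (auto simp: P0_def)
  have n2: "X ?i \<notin> set R" using post by (auto simp: R_def Rest k1 expr_X_set)
  have theP: "(THE p. p < length ts \<and> ts ! p = X ?i) = length P0"
    by (rule the_pos[OF tsP n1 n2])
  show ?thesis
  proof (cases "a = Leaf")
    case True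
    then have "F = []" using F(1) by simp
    then have "0 < length P0 \<and> ts ! (length P0 - 1) = LP" using tsP by (simp add: P0_def nth_append)
    then show ?thesis using True theP by (simp add: name_comp_def Let_def)
  next
    case False
    then have Fn: "F \<noteq> []" "last F \<noteq> LP" using F(3) by auto
    have notLP: "\<not> (0 < length P0 \<and> ts ! (length P0 - 1) = LP)"
      using Fn tsP by (simp add: P0_def nth_append last_conv_nth)
    obtain a1 a2 where a: "a = Node a1 a2" using False by (cases a) auto
    have rs1: "1 \<le> rs a" using a by simp
    define q where "q = length P0 + rs a"
    have lenE: "length ?E = length F + 1 + rs a" using F(1) by simp
    have q2: "q = length pre + length ?E" using lenE by (simp add: q_def P0_def)
    have Rest_ne: "Rest \<noteq> []" using Rest by simp
    have tsR: "\<And>j. ts ! (length P0 + 1 + j) = R ! j" using tsP by (simp add: nth_append)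
    have Gq: "(GREATEST q. q < length ts \<and> length P0 < q \<and> (\<forall>k. length P0 < k \<and> k \<le> q \<longrightarrow> ts ! k = RP)) = q"
    proof (rule Greatest_equality)
      show "q < length ts \<and> length P0 < q \<and> (\<forall>k. length P0 < k \<and> k \<le> q \<longrightarrow> ts ! k = RP)"
      proof (intro conjI allI impI)
        show "q < length ts" using tsP Rest_ne by (simp add: q_def R_def)
        show "length P0 < q" using rs1 by (simp add: q_def)
      next
        fix k' assume "length P0 < k' \<and> k' \<le> q"
        then have j: "k' = length P0 + 1 + (k' - length P0 - 1)" "k' - length P0 - 1 < rs a" by (auto simp: q_def)
        then show "ts ! k' = RP" using tsR[of "k' - length P0 - 1"] by (simp add: R_def nth_append)
      qed
    next
      fix y assume y: "y < length ts \<and> length P0 < y \<and> (\<forall>k. length P0 < k \<and> k \<le> y \<longrightarrow> ts ! k = RP)"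
      show "y \<le> q"
      proof (rule ccontr)
        assume "\<not> y \<le> q"
        then have "ts ! (length P0 + 1 + rs a) = RP" using y by (simp add: q_def)
        moreover have "ts ! (length P0 + 1 + rs a) = expr b k1 ! 0" using tsR[of "rs a"] by (simp add: R_def Rest nth_append)
        ultimately show False using expr_hd by metis
      qed
    qed
    have tsE: "\<And>x. ts ! (length pre + 1 + x) = (?E @ Rest) ! x" using ts by (simp add: nth_append)
    have dropE: "\<And>j. j < length ?E \<Longrightarrow> take (q - (length pre + 1 + j) + 1) (drop (length pre + 1 + j) ts) = drop j ?E"
    proof -
      fix j assume j: "j < length ?E"
      have "drop (length pre + 1 + j) ts = drop j ?E @ Rest" using ts j by simp
      moreover have "q - (length pre + 1 + j) + 1 = length (drop j ?E)" using q2 j lenE by simp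
      ultimately show "take (q - (length pre + 1 + j) + 1) (drop (length pre + 1 + j) ts) = drop j ?E" by simp
    qed
    have Gm: "match_lp ts q = length pre + 1"
      unfolding match_lp_def
    proof (rule Greatest_equality)
      have "take (q - (length pre + 1 + 0) + 1) (drop (length pre + 1 + 0) ts) = ?E" using dropE[of 0] by simp
      then have "balanced_seg ts (length pre + 1) q"
        unfolding balanced_seg_def Let_def using expr_cLP[of a k] expr_cRP[of a k] by simp
      moreover have "ts ! (length pre + 1) = LP" using ts a by (simp add: nth_append)
      moreover have "length pre + 1 < q" using q2 a by simp
      ultimately show "length pre + 1 < q \<and> ts ! (length pre + 1) = LP \<and> balanced_seg ts (length pre + 1) q" by simp
    next
      fix y assume y: "y < q \<and> ts ! y = LP \<and> balanced_seg ts y q"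
      show "y \<le> length pre + 1"
      proof (rule ccontr)
        assume "\<not> y \<le> length pre + 1"
        then have j0: "y = length pre + 1 + (y - length pre - 1)" "0 < y - length pre - 1" by auto
        define j where "j = y - length pre - 1"
        have j: "y = length pre + 1 + j" "0 < j" using j0 by (simp_all add: j_def)
        have jE: "j < length ?E" using y j q2 by simp
        have "balanced_seg ts y q" using y by simp
        then have "cLP (drop j ?E) = cRP (drop j ?E)"
          unfolding balanced_seg_def Let_def using dropE[of j] jE j by simp
        then show False using expr_suffix[OF False j(2) jE] by simp
      qed
    qed
    obtain jj G where jj: "?E = replicate jj LP @ [X k] @ G" "1 \<le> jj" using expr_start[of a k] False by blast
    have Lr: "(LEAST r. length pre + 1 < r \<and> r < length ts \<and> is_X (ts ! r)) = length pre + 1 + jj"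
    proof (rule Least_equality)
      show "length pre + 1 < length pre + 1 + jj \<and> length pre + 1 + jj < length ts \<and> is_X (ts ! (length pre + 1 + jj))"
        using jj tsE[of jj] ts by (simp add: nth_append)
    next
      fix y assume y: "length pre + 1 < y \<and> y < length ts \<and> is_X (ts ! y)"
      show "length pre + 1 + jj \<le> y"
      proof (rule ccontr)
        assume "\<not> length pre + 1 + jj \<le> y"
        define x where "x = y - length pre - 1"
        have x: "y = length pre + 1 + x" "x < jj" using y \<open>\<not> length pre + 1 + jj \<le> y\<close> by (auto simp: x_def)
        have "ts ! y = LP" using tsE[of x] x jj(1) by (simp add: nth_append)
        then show False using y by simp
      qed
    qed
    have "ts ! (length pre + 1 + jj) = X k" using tsE[of jj] jj by (simp add: nth_append)
    then show ?thesis using theP notLP Gq Gm Lr by (simp add: name_comp_def Let_def) blast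
  qed
qed



lemma name_comp_ctx:
  "ts = pre @ expr s k @ post \<Longrightarrow> (\<forall>j. X j \<in> set pre \<longrightarrow> j < k) \<Longrightarrow> (\<forall>j. X j \<in> set post \<longrightarrow> k + internal s < j)
   \<Longrightarrow> k \<le> i \<Longrightarrow> i < k + internal s \<Longrightarrow> name_comp ts i = nm s k ! (i - k)"
proof (induction s arbitrary: pre post k i ts)
  case Leaf then show ?case by simp
next
  case (Node a b)
  define k1 where "k1 = k + internal a + 1"
  have ts: "ts = pre @ [LP] @ expr a k @ (expr b k1 @ [RP] @ post)" using Node.prems(1) by (simp add: k1_def)
  consider "i < k + internal a" | "i = k + internal a" | "k + internal a < i" by linarith
  then show ?case
  proof cases
    case 1
    have "name_comp ts i = nm a k ! (i - k)"
    proof (rule Node.IH(1)[where pre="pre @ [LP]" and post="expr b k1 @ [RP] @ post" and k=k and i=i and ts=ts])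
      show "ts = (pre @ [LP]) @ expr a k @ expr b k1 @ [RP] @ post" using ts by simp
      show "\<forall>j. X j \<in> set (pre @ [LP]) \<longrightarrow> j < k" using Node.prems(2) by auto
      show "\<forall>j. X j \<in> set (expr b k1 @ [RP] @ post) \<longrightarrow> k + internal a < j"
        using Node.prems(3) by (auto simp: expr_X_set k1_def)
    qed (use 1 Node.prems in auto)
    moreover have "i - k < internal a" using 1 Node.prems(4) by linarith
    ultimately show ?thesis by (simp add: nth_append)
  next
    case 2
    have "name_comp ts (k + internal a) = k"
      by (rule name_comp_direct[OF ts refl k1_def]) (use Node.prems(2,3) in auto)
    then show ?thesis using 2 by (simp add: nth_append)
  next
    case 3
    have "name_comp ts i = nm b k1 ! (i - k1)"
    proof (rule Node.IH(2)[where pre="pre @ [LP] @ expr a k" and post="[RP] @ post" and k=k1 and i=i and ts=ts])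
      show "ts = (pre @ [LP] @ expr a k) @ expr b k1 @ [RP] @ post" using ts by simp
      show "\<forall>j. X j \<in> set (pre @ [LP] @ expr a k) \<longrightarrow> j < k1"
        using Node.prems(2) by (auto simp: expr_X_set k1_def)
      show "\<forall>j. X j \<in> set ([RP] @ post) \<longrightarrow> k1 + internal b < j"
        using Node.prems(3) by (auto simp: k1_def)
    qed (use 3 Node.prems in \<open>auto simp: k1_def\<close>)
    moreover have "nm (Node a b) k ! (i - k) = nm b k1 ! (i - k1)"
    proof -
      have e: "i - k = internal a + 1 + (i - k1)" using 3 by (simp add: k1_def)
      show ?thesis unfolding e by (simp add: nth_append k1_def)
    qed
    ultimately show ?thesis by simp
  qed
qed

lemma name_nm: "name t = nm t 1"
proof (rule nth_equalityI)
  show "length (name t) = length (nm t 1)" by (simp only: name_def length_map length_upt length_nm diff_add_inverse2)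
next
  fix j assume "j < length (name t)"
  then have j: "j < internal t" by (simp only: name_def length_map length_upt diff_add_inverse2)
  have "name t ! j = name_comp (cexpr t) (1 + j)" using j by (simp only: name_def nth_map length_upt nth_upt diff_add_inverse2 add.commute)
  also have "\<dots> = nm t 1 ! j"
    using name_comp_ctx[of "cexpr t" "[]" t 1 "[]" "1 + j"] j by (simp add: cexpr_def)
  finally show "name t ! j = nm t 1 ! j" .
qed



lemma if_mult0: "(if P then a else 0) * b = (if P then a * b else (0::'a::field))"
  "b * (if P then a else 0) = (if P then b * a else (0::'a::field))"
  by simp_all

lemma if_add0: "(if P then a + b else (0::'a::field)) = (if P then a else 0) + (if P then b else 0)"
  by simp

lemma free_on_iff: "f \<in> free_on B \<longleftrightarrow> finite {a. f a \<noteq> 0} \<and> {a. f a \<noteq> 0} \<subseteq> B"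
  by (simp add: free_on_def)

lemma bilin_expand:
  fixes f g :: "'a \<Rightarrow> 'k::field"
  assumes "finite AX" "finite AY" "{a. f a \<noteq> 0} \<subseteq> AX" "{b. g b \<noteq> 0} \<subseteq> AY"
  shows "bilin_ext op f g c = (\<Sum>a\<in>AX. \<Sum>b\<in>AY. if op a b = c then f a * g b else 0)"
proof -
  have "bilin_ext op f g c = (\<Sum>(a, b)\<in>{(a, b). f a \<noteq> 0 \<and> g b \<noteq> 0 \<and> op a b = c}. f a * g b)"
    by (simp add: bilin_ext_def)
  also have "\<dots> = (\<Sum>(a, b)\<in>AX \<times> AY. if op a b = c then f a * g b else 0)"
    by (rule sum.mono_neutral_cong_left) (use assms in \<open>auto split: if_splits\<close>)
  also have "\<dots> = (\<Sum>a\<in>AX. \<Sum>b\<in>AY. if op a b = c then f a * g b else 0)"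
    by (simp add: sum.cartesian_product)
  finally show ?thesis .
qed

lemma bilin_supp:
  fixes f g :: "'a \<Rightarrow> 'k::field"
  shows "{c. bilin_ext op f g c \<noteq> 0} \<subseteq> (\<lambda>(a, b). op a b) ` ({a. f a \<noteq> 0} \<times> {b. g b \<noteq> 0})"
proof
  fix c assume "c \<in> {c. bilin_ext op f g c \<noteq> 0}"
  moreover have "bilin_ext op f g c = 0" if "{(a, b). f a \<noteq> 0 \<and> g b \<noteq> 0 \<and> op a b = c} = {}"
    using that by (simp only: bilin_ext_def sum.empty)
  ultimately have "{(a, b). f a \<noteq> 0 \<and> g b \<noteq> 0 \<and> op a b = c} \<noteq> {}" by auto
  then show "c \<in> (\<lambda>(a, b). op a b) ` ({a. f a \<noteq> 0} \<times> {b. g b \<noteq> 0})" by auto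
qed

lemma bilin_free:
  fixes f g :: "'a \<Rightarrow> 'k::field"
  assumes "f \<in> free_on B" "g \<in> free_on B" "\<forall>a\<in>B. \<forall>b\<in>B. op a b \<in> B"
  shows "bilin_ext op f g \<in> free_on B"
proof -
  have fin: "finite ((\<lambda>(a, b). op a b) ` ({a. f a \<noteq> 0} \<times> {b. g b \<noteq> 0}))"
    using assms(1,2) by (simp add: free_on_iff)
  have sub: "(\<lambda>(a, b). op a b) ` ({a. f a \<noteq> 0} \<times> {b. g b \<noteq> 0}) \<subseteq> B"
    using assms by (auto simp: free_on_iff)
  show ?thesis using bilin_supp[of op f g] fin sub
    by (simp add: free_on_iff) (meson finite_subset subset_trans)
qed

lemma sum_delta_inner:
  fixes Q :: "'y \<Rightarrow> 'a \<Rightarrow> 'b \<Rightarrow> 'k::field"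
  assumes "finite S" "finite AY" "finite AZ" "\<forall>a\<in>AY. \<forall>b\<in>AZ. \<phi> a b \<in> S"
  shows "(\<Sum>y\<in>S. \<Sum>a\<in>AY. \<Sum>b\<in>AZ. if \<phi> a b = y then Q y a b else 0) = (\<Sum>a\<in>AY. \<Sum>b\<in>AZ. Q (\<phi> a b) a b)"
proof -
  have "(\<Sum>y\<in>S. \<Sum>a\<in>AY. \<Sum>b\<in>AZ. if \<phi> a b = y then Q y a b else 0) = (\<Sum>a\<in>AY. \<Sum>y\<in>S. \<Sum>b\<in>AZ. if \<phi> a b = y then Q y a b else 0)"
    by (rule sum.swap)
  also have "\<dots> = (\<Sum>a\<in>AY. \<Sum>b\<in>AZ. \<Sum>y\<in>S. if \<phi> a b = y then Q y a b else 0)"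
    by (rule sum.cong[OF refl]) (rule sum.swap)
  also have "\<dots> = (\<Sum>a\<in>AY. \<Sum>b\<in>AZ. Q (\<phi> a b) a b)"
    using assms by (intro sum.cong refl) (simp add: sum.delta')
  finally show ?thesis .
qed

lemma bilin_left_triple:
  fixes f g h :: "'a \<Rightarrow> 'k::field"
  assumes AX: "finite AX" "{a. f a \<noteq> 0} \<subseteq> AX" and AY: "finite AY" "{a. g a \<noteq> 0} \<subseteq> AY"
    and AZ: "finite AZ" "{a. h a \<noteq> 0} \<subseteq> AZ"
  shows "bilin_ext op1 (bilin_ext op2 f g) h c =
    (\<Sum>a\<in>AX. \<Sum>a'\<in>AY. \<Sum>b\<in>AZ. if op1 (op2 a a') b = c then f a * g a' * h b else 0)"
proof -
  define AXY where "AXY = (\<lambda>(a, b). op2 a b) ` (AX \<times> AY)"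
  have fAXY: "finite AXY" using AX AY by (simp add: AXY_def)
  have sAXY: "{x. bilin_ext op2 f g x \<noteq> 0} \<subseteq> AXY"
    using bilin_supp[of op2 f g] AX AY unfolding AXY_def by blast
  define W where "W x = (\<Sum>b\<in>AZ. if op1 x b = c then h b else 0)" for x
  have "bilin_ext op1 (bilin_ext op2 f g) h c = (\<Sum>x\<in>AXY. \<Sum>b\<in>AZ. if op1 x b = c then bilin_ext op2 f g x * h b else 0)"
    by (rule bilin_expand[OF fAXY AZ(1) sAXY AZ(2)])
  also have "\<dots> = (\<Sum>x\<in>AXY. bilin_ext op2 f g x * W x)"
    unfolding W_def by (simp add: sum_distrib_left if_mult0)
  also have "\<dots> = (\<Sum>x\<in>AXY. \<Sum>a\<in>AX. \<Sum>a'\<in>AY. if op2 a a' = x then f a * g a' * W x else 0)"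
    by (simp add: bilin_expand[OF AX(1) AY(1) AX(2) AY(2), of op2] sum_distrib_right if_mult0)
  also have "\<dots> = (\<Sum>a\<in>AX. \<Sum>a'\<in>AY. f a * g a' * W (op2 a a'))"
    by (rule sum_delta_inner[OF fAXY AX(1) AY(1)]) (auto simp: AXY_def)
  also have "\<dots> = (\<Sum>a\<in>AX. \<Sum>a'\<in>AY. \<Sum>b\<in>AZ. if op1 (op2 a a') b = c then f a * g a' * h b else 0)"
    unfolding W_def by (simp add: sum_distrib_left if_mult0 mult.assoc)
  finally show ?thesis .
qed

lemma bilin_right_triple:
  fixes f g h :: "'a \<Rightarrow> 'k::field"
  assumes AX: "finite AX" "{a. f a \<noteq> 0} \<subseteq> AX" and AY: "finite AY" "{a. g a \<noteq> 0} \<subseteq> AY"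
    and AZ: "finite AZ" "{a. h a \<noteq> 0} \<subseteq> AZ"
  shows "bilin_ext op3 f (bilin_ext op4 g h) c =
    (\<Sum>a\<in>AX. \<Sum>a'\<in>AY. \<Sum>b\<in>AZ. if op3 a (op4 a' b) = c then f a * g a' * h b else 0)"
proof -
  define AYZ where "AYZ = (\<lambda>(a, b). op4 a b) ` (AY \<times> AZ)"
  have fAYZ: "finite AYZ" using AZ AY by (simp add: AYZ_def)
  have sAYZ: "{x. bilin_ext op4 g h x \<noteq> 0} \<subseteq> AYZ"
    using bilin_supp[of op4 g h] AZ AY unfolding AYZ_def by blast
  have "bilin_ext op3 f (bilin_ext op4 g h) c = (\<Sum>a\<in>AX. \<Sum>y\<in>AYZ. if op3 a y = c then f a * bilin_ext op4 g h y else 0)"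
    by (rule bilin_expand[OF AX(1) fAYZ AX(2) sAYZ])
  also have "\<dots> = (\<Sum>a\<in>AX. \<Sum>y\<in>AYZ. \<Sum>a'\<in>AY. \<Sum>b\<in>AZ. if op4 a' b = y then (if op3 a y = c then f a * g a' * h b else 0) else 0)"
  proof (intro sum.cong refl)
    fix a y
    show "(if op3 a y = c then f a * bilin_ext op4 g h y else 0) = (\<Sum>a'\<in>AY. \<Sum>b\<in>AZ. if op4 a' b = y then (if op3 a y = c then f a * g a' * h b else 0) else 0)"
    proof (cases "op3 a y = c")
      case True
      have "f a * bilin_ext op4 g h y = (\<Sum>a'\<in>AY. \<Sum>b\<in>AZ. f a * (if op4 a' b = y then g a' * h b else 0))"
        by (simp add: bilin_expand[OF AY(1) AZ(1) AY(2) AZ(2), of op4] sum_distrib_left)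
      also have "\<dots> = (\<Sum>a'\<in>AY. \<Sum>b\<in>AZ. if op4 a' b = y then (if op3 a y = c then f a * g a' * h b else 0) else 0)"
        using True by (intro sum.cong refl) (simp add: mult.assoc)
      finally show ?thesis using True by simp
    next
      case False
      then show ?thesis by (simp cong: if_cong)
    qed
  qed
  also have "\<dots> = (\<Sum>a\<in>AX. \<Sum>a'\<in>AY. \<Sum>b\<in>AZ. if op3 a (op4 a' b) = c then f a * g a' * h b else 0)"
    by (rule sum.cong[OF refl], rule sum_delta_inner[OF fAYZ AY(1) AZ(1)]) (auto simp: AYZ_def)
  finally show ?thesis .
qed

lemma bilin_law:
  fixes f g h :: "'a \<Rightarrow> 'k::field"
  assumes "f \<in> free_on B" "g \<in> free_on B" "h \<in> free_on B"
    and law: "\<forall>a\<in>B. \<forall>a'\<in>B. \<forall>b\<in>B. op1 (op2 a a') b = op3 a (op4 a' b)"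
  shows "bilin_ext op1 (bilin_ext op2 f g) h = bilin_ext op3 f (bilin_ext op4 g h)"
proof
  fix c
  let ?AX = "{a. f a \<noteq> 0}" and ?AY = "{a. g a \<noteq> 0}" and ?AZ = "{a. h a \<noteq> 0}"
  have fin: "finite ?AX" "finite ?AY" "finite ?AZ" "?AX \<subseteq> B" "?AY \<subseteq> B" "?AZ \<subseteq> B"
    using assms by (auto simp: free_on_iff)
  show "bilin_ext op1 (bilin_ext op2 f g) h c = bilin_ext op3 f (bilin_ext op4 g h) c"
    unfolding bilin_left_triple[OF fin(1) subset_refl fin(2) subset_refl fin(3) subset_refl]
      bilin_right_triple[OF fin(1) subset_refl fin(2) subset_refl fin(3) subset_refl]
  proof (intro sum.cong refl)
    fix a a' b assume "a \<in> ?AX" "a' \<in> ?AY" "b \<in> ?AZ"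
    then have "op1 (op2 a a') b = op3 a (op4 a' b)" using law fin(4-6) by blast
    then show "(if op1 (op2 a a') b = c then f a * g a' * h b else 0) = (if op3 a (op4 a' b) = c then f a * g a' * h b else 0)" by simp
  qed
qed

lemma subspace_free: "subspace_fun (free_on B :: ('a \<Rightarrow> 'k::field) set)"
  unfolding subspace_fun_def
proof (intro conjI ballI allI)
  show "(\<lambda>_. 0) \<in> free_on B" by (simp add: free_on_iff)
next
  fix f g :: "'a \<Rightarrow> 'k" assume a: "f \<in> free_on B" "g \<in> free_on B"
  have "{x. f x + g x \<noteq> 0} \<subseteq> {x. f x \<noteq> 0} \<union> {x. g x \<noteq> 0}" by auto
  then show "(\<lambda>x. f x + g x) \<in> free_on B" using a unfolding free_on_iff
    by (meson finite_Un finite_subset le_sup_iff subset_trans)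
next
  fix c :: 'k and f :: "'a \<Rightarrow> 'k" assume a: "f \<in> free_on B"
  have "{x. c * f x \<noteq> 0} \<subseteq> {x. f x \<noteq> 0}" by auto
  then show "(\<lambda>x. c * f x) \<in> free_on B" using a unfolding free_on_iff
    by (meson finite_subset subset_trans)
qed

lemma bilin_add_left:
  fixes f g h :: "'a \<Rightarrow> 'k::field"
  assumes a: "f \<in> free_on B" "g \<in> free_on B" "h \<in> free_on B"
  shows "bilin_ext op (\<lambda>x. f x + g x) h = (\<lambda>x. bilin_ext op f h x + bilin_ext op g h x)"
proof
  fix c
  let ?AX = "{a. f a \<noteq> 0} \<union> {a. g a \<noteq> 0}" and ?AZ = "{a. h a \<noteq> 0}"
  have fin: "finite ?AX" "finite ?AZ" using a by (auto simp: free_on_iff)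
  have s: "{a. f a \<noteq> 0} \<subseteq> ?AX" "{a. g a \<noteq> 0} \<subseteq> ?AX" "{a. f a + g a \<noteq> 0} \<subseteq> ?AX" by auto
  show "bilin_ext op (\<lambda>x. f x + g x) h c = bilin_ext op f h c + bilin_ext op g h c"
    proof -
      have pw: "\<And>x b. (if op x b = c then (f x + g x) * h b else 0) = (if op x b = c then f x * h b else 0) + (if op x b = c then g x * h b else 0)"
        by (simp add: distrib_right)
      have "bilin_ext op (\<lambda>x. f x + g x) h c = (\<Sum>x\<in>?AX. \<Sum>b\<in>?AZ. if op x b = c then (f x + g x) * h b else 0)"
        by (rule bilin_expand[OF fin(1) fin(2) s(3) subset_refl])
      also have "\<dots> = (\<Sum>x\<in>?AX. \<Sum>b\<in>?AZ. if op x b = c then f x * h b else 0) + (\<Sum>x\<in>?AX. \<Sum>b\<in>?AZ. if op x b = c then g x * h b else 0)"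
        by (simp only: pw sum.distrib)
      also have "\<dots> = bilin_ext op f h c + bilin_ext op g h c"
        by (simp only: bilin_expand[OF fin(1) fin(2) s(1) subset_refl] bilin_expand[OF fin(1) fin(2) s(2) subset_refl])
      finally show ?thesis .
    qed
qed

lemma bilin_add_right:
  fixes f g h :: "'a \<Rightarrow> 'k::field"
  assumes a: "f \<in> free_on B" "g \<in> free_on B" "h \<in> free_on B"
  shows "bilin_ext op h (\<lambda>x. f x + g x) = (\<lambda>x. bilin_ext op h f x + bilin_ext op h g x)"
proof
  fix c
  let ?AX = "{a. f a \<noteq> 0} \<union> {a. g a \<noteq> 0}" and ?AZ = "{a. h a \<noteq> 0}"
  have fin: "finite ?AX" "finite ?AZ" using a by (auto simp: free_on_iff)
  have s: "{a. f a \<noteq> 0} \<subseteq> ?AX" "{a. g a \<noteq> 0} \<subseteq> ?AX" "{a. f a + g a \<noteq> 0} \<subseteq> ?AX" by auto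
  show "bilin_ext op h (\<lambda>x. f x + g x) c = bilin_ext op h f c + bilin_ext op h g c"
    proof -
      have pw: "\<And>x b. (if op x b = c then h x * (f b + g b) else 0) = (if op x b = c then h x * f b else 0) + (if op x b = c then h x * g b else 0)"
        by (simp add: distrib_left)
      have "bilin_ext op h (\<lambda>x. f x + g x) c = (\<Sum>x\<in>?AZ. \<Sum>b\<in>?AX. if op x b = c then h x * (f b + g b) else 0)"
        by (rule bilin_expand[OF fin(2) fin(1) subset_refl s(3)])
      also have "\<dots> = (\<Sum>x\<in>?AZ. \<Sum>b\<in>?AX. if op x b = c then h x * f b else 0) + (\<Sum>x\<in>?AZ. \<Sum>b\<in>?AX. if op x b = c then h x * g b else 0)"
        by (simp only: pw sum.distrib)
      also have "\<dots> = bilin_ext op h f c + bilin_ext op h g c"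
        by (simp only: bilin_expand[OF fin(2) fin(1) subset_refl s(1)] bilin_expand[OF fin(2) fin(1) subset_refl s(2)])
      finally show ?thesis .
    qed
qed

lemma bilin_scal:
  fixes f g :: "'a \<Rightarrow> 'k::field"
  assumes a: "f \<in> free_on B" "g \<in> free_on B"
  shows "bilin_ext op (\<lambda>x. c * f x) g = (\<lambda>x. c * bilin_ext op f g x) \<and>
        bilin_ext op f (\<lambda>x. c * g x) = (\<lambda>x. c * bilin_ext op f g x)"
proof -
  let ?AX = "{a. f a \<noteq> 0}" and ?AY = "{a. g a \<noteq> 0}"
  have fin: "finite ?AX" "finite ?AY" using a by (auto simp: free_on_iff)
  have s: "{a. c * f a \<noteq> 0} \<subseteq> ?AX" "{a. c * g a \<noteq> 0} \<subseteq> ?AY" by auto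
  have 1: "bilin_ext op (\<lambda>x. c * f x) g d = c * bilin_ext op f g d" for d
  proof -
    have pw: "\<And>x b. (if op x b = d then c * f x * g b else 0) = c * (if op x b = d then f x * g b else 0)" by simp
    show ?thesis unfolding bilin_expand[OF fin(1) fin(2) s(1) subset_refl] bilin_expand[OF fin(1) fin(2) subset_refl subset_refl]
      by (simp only: pw sum_distrib_left)
  qed
  have 2: "bilin_ext op f (\<lambda>x. c * g x) d = c * bilin_ext op f g d" for d
  proof -
    have pw: "\<And>x b. (if op x b = d then f x * (c * g b) else 0) = c * (if op x b = d then f x * g b else 0)" by simp
    show ?thesis unfolding bilin_expand[OF fin(1) fin(2) subset_refl s(2)] bilin_expand[OF fin(1) fin(2) subset_refl subset_refl]
      by (simp only: pw sum_distrib_left)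
  qed
  show ?thesis using 1 2 by auto
qed

lemma bilinear_free:
  fixes op :: "'a \<Rightarrow> 'a \<Rightarrow> 'a"
  assumes cl: "\<forall>a\<in>B. \<forall>b\<in>B. op a b \<in> B"
  shows "bilinear_on (free_on B :: ('a \<Rightarrow> 'k::field) set) (bilin_ext op)"
proof -
  have c1: "\<forall>f\<in>(free_on B :: ('a \<Rightarrow> 'k) set). \<forall>g\<in>free_on B. bilin_ext op f g \<in> free_on B"
  proof (intro ballI)
    fix f g :: "'a \<Rightarrow> 'k" assume "f \<in> free_on B" "g \<in> free_on B"
    then show "bilin_ext op f g \<in> free_on B" by (rule bilin_free[OF _ _ cl])
  qed
  have c2: "\<forall>f\<in>(free_on B :: ('a \<Rightarrow> 'k) set). \<forall>g\<in>free_on B. \<forall>h\<in>free_on B.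
      bilin_ext op (\<lambda>x. f x + g x) h = (\<lambda>x. bilin_ext op f h x + bilin_ext op g h x)
    \<and> bilin_ext op h (\<lambda>x. f x + g x) = (\<lambda>x. bilin_ext op h f x + bilin_ext op h g x)"
  proof (intro ballI conjI)
    fix f g h :: "'a \<Rightarrow> 'k" assume a: "f \<in> free_on B" "g \<in> free_on B" "h \<in> free_on B"
    show "bilin_ext op (\<lambda>x. f x + g x) h = (\<lambda>x. bilin_ext op f h x + bilin_ext op g h x)"
      by (rule bilin_add_left[OF a])
    show "bilin_ext op h (\<lambda>x. f x + g x) = (\<lambda>x. bilin_ext op h f x + bilin_ext op h g x)"
      by (rule bilin_add_right[OF a])
  qed
  have c3: "\<forall>c. \<forall>f\<in>(free_on B :: ('a \<Rightarrow> 'k) set). \<forall>g\<in>free_on B.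
      bilin_ext op (\<lambda>x. c * f x) g = (\<lambda>x. c * bilin_ext op f g x) \<and>
      bilin_ext op f (\<lambda>x. c * g x) = (\<lambda>x. c * bilin_ext op f g x)"
  proof (intro allI ballI)
    fix c :: 'k and f g :: "'a \<Rightarrow> 'k" assume a: "f \<in> free_on B" "g \<in> free_on B"
    show "bilin_ext op (\<lambda>x. c * f x) g = (\<lambda>x. c * bilin_ext op f g x) \<and>
      bilin_ext op f (\<lambda>x. c * g x) = (\<lambda>x. c * bilin_ext op f g x)"
      by (rule bilin_scal[OF a])
  qed
  show ?thesis unfolding bilinear_on_def by (intro conjI c1 c2 c3)
qed

lemma law_free:
  assumes l: "\<forall>a\<in>B. \<forall>a'\<in>B. \<forall>b\<in>B. op1 (op2 a a') b = op3 a (op4 a' b)"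
  shows "\<forall>f\<in>(free_on B :: ('a \<Rightarrow> 'k::field) set). \<forall>g\<in>free_on B. \<forall>h\<in>free_on B.
     bilin_ext op1 (bilin_ext op2 f g) h = bilin_ext op3 f (bilin_ext op4 g h)"
proof (intro ballI)
  fix f g h :: "'a \<Rightarrow> 'k" assume "f \<in> free_on B" "g \<in> free_on B" "h \<in> free_on B"
  then show "bilin_ext op1 (bilin_ext op2 f g) h = bilin_ext op3 f (bilin_ext op4 g h)"
    by (rule bilin_law[OF _ _ _ l])
qed

lemma assoc_L_free:
  assumes cl1: "\<forall>a\<in>B. \<forall>b\<in>B. ov a b \<in> B" and cl2: "\<forall>a\<in>B. \<forall>b\<in>B. un a b \<in> B"
    and l1: "\<forall>a\<in>B. \<forall>a'\<in>B. \<forall>b\<in>B. ov (ov a a') b = ov a (ov a' b)"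
    and l2: "\<forall>a\<in>B. \<forall>a'\<in>B. \<forall>b\<in>B. un (un a a') b = un a (un a' b)"
    and l3: "\<forall>a\<in>B. \<forall>a'\<in>B. \<forall>b\<in>B. un (ov a a') b = ov a (un a' b)"
  shows "assoc_L_algebra (free_on B :: ('a \<Rightarrow> 'k::field) set) (bilin_ext ov) (bilin_ext un)"
  unfolding assoc_L_algebra_def
  by (intro conjI subspace_free bilinear_free[OF cl1] bilinear_free[OF cl2] law_free[OF l1] law_free[OF l2] law_free[OF l3])



lemma lin_ext_at:
  assumes inj: "inj_on \<phi> B" and f: "f \<in> free_on B" and a: "a \<in> B"
  shows "lin_ext \<phi> f (\<phi> a) = (f a :: 'k::field)"
proof -
  have sub: "{x. f x \<noteq> 0 \<and> \<phi> x = \<phi> a} \<subseteq> {a}"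
    using f inj a by (auto simp: free_on_iff inj_on_def)
  have "lin_ext \<phi> f (\<phi> a) = sum f {x. f x \<noteq> 0 \<and> \<phi> x = \<phi> a}" by (simp add: lin_ext_def)
  also have "\<dots> = sum f {a}"
    by (rule sum.mono_neutral_left) (use sub in auto)
  finally show ?thesis by simp
qed

lemma lin_ext_out:
  assumes f: "f \<in> free_on B" and c: "c \<notin> \<phi> ` B"
  shows "lin_ext \<phi> f c = (0 :: 'k::field)"
proof -
  have E: "{x. f x \<noteq> 0 \<and> \<phi> x = c} = {}" using f c by (auto simp: free_on_iff)
  have "lin_ext \<phi> f c = sum f {x. f x \<noteq> 0 \<and> \<phi> x = c}" by (simp add: lin_ext_def)
  then show ?thesis unfolding E by simp
qed

lemma lin_ext_supp:
  "{c. lin_ext \<phi> f c \<noteq> (0::'k::field)} \<subseteq> \<phi> ` {a. f a \<noteq> 0}"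
proof
  fix c assume "c \<in> {c. lin_ext \<phi> f c \<noteq> 0}"
  then have c: "lin_ext \<phi> f c \<noteq> 0" by simp
  have L: "lin_ext \<phi> f c = sum f {x. f x \<noteq> 0 \<and> \<phi> x = c}" by (simp add: lin_ext_def)
  have "{x. f x \<noteq> 0 \<and> \<phi> x = c} \<noteq> {}"
  proof
    assume E: "{x. f x \<noteq> 0 \<and> \<phi> x = c} = {}"
    have "lin_ext \<phi> f c = 0" unfolding L E by simp
    then show False using c by simp
  qed
  then show "c \<in> \<phi> ` {a. f a \<noteq> 0}" by auto
qed

lemma lin_ext_free:
  assumes "f \<in> free_on B" 
  shows "lin_ext \<phi> (f :: _ \<Rightarrow> 'k::field) \<in> free_on (\<phi> ` B)"
  using lin_ext_supp[of \<phi> f] assms unfolding free_on_iff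
  by (meson finite_imageI finite_subset image_mono subset_trans)

lemma lin_hom:
  fixes f g :: "'a \<Rightarrow> 'k::field"
  assumes inj: "inj_on \<phi> B" and f: "f \<in> free_on B" and g: "g \<in> free_on B"
    and cl: "\<forall>a\<in>B. \<forall>b\<in>B. ov a b \<in> B"
    and hom: "\<forall>a\<in>B. \<forall>b\<in>B. \<phi> (ov a b) = ov' (\<phi> a) (\<phi> b)"
  shows "lin_ext \<phi> (bilin_ext ov f g) = bilin_ext ov' (lin_ext \<phi> f) (lin_ext \<phi> g)"
proof
  fix c
  let ?AX = "{a. f a \<noteq> 0}" and ?AY = "{a. g a \<noteq> 0}"
  have fin: "finite ?AX" "finite ?AY" "?AX \<subseteq> B" "?AY \<subseteq> B" using f g by (auto simp: free_on_iff)
  have injX: "inj_on \<phi> ?AX" and injY: "inj_on \<phi> ?AY" using inj fin(3,4) inj_on_subset by blast+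
  have "bilin_ext ov' (lin_ext \<phi> f) (lin_ext \<phi> g) c =
     (\<Sum>a'\<in>\<phi> ` ?AX. \<Sum>b'\<in>\<phi> ` ?AY. if ov' a' b' = c then lin_ext \<phi> f a' * lin_ext \<phi> g b' else 0)"
    by (rule bilin_expand) (use fin lin_ext_supp[of \<phi> f] lin_ext_supp[of \<phi> g] in auto)
  also have "\<dots> = (\<Sum>a\<in>?AX. \<Sum>b\<in>?AY. if ov' (\<phi> a) (\<phi> b) = c then lin_ext \<phi> f (\<phi> a) * lin_ext \<phi> g (\<phi> b) else 0)"
    by (simp add: sum.reindex[OF injX] sum.reindex[OF injY])
  also have "\<dots> = (\<Sum>a\<in>?AX. \<Sum>b\<in>?AY. if \<phi> (ov a b) = c then f a * g b else 0)"
  proof (intro sum.cong refl)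
    fix a b assume "a \<in> ?AX" "b \<in> ?AY"
    then have "a \<in> B" "b \<in> B" using fin by auto
    then show "(if ov' (\<phi> a) (\<phi> b) = c then lin_ext \<phi> f (\<phi> a) * lin_ext \<phi> g (\<phi> b) else 0) = (if \<phi> (ov a b) = c then f a * g b else 0)"
      using lin_ext_at[OF inj f] lin_ext_at[OF inj g] hom by simp
  qed
  finally have R: "bilin_ext ov' (lin_ext \<phi> f) (lin_ext \<phi> g) c = (\<Sum>a\<in>?AX. \<Sum>b\<in>?AY. if \<phi> (ov a b) = c then f a * g b else 0)" .
  have H: "bilin_ext ov f g \<in> free_on B" using bilin_free[OF f g cl] .
  show "lin_ext \<phi> (bilin_ext ov f g) c = bilin_ext ov' (lin_ext \<phi> f) (lin_ext \<phi> g) c"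
  proof (cases "c \<in> \<phi> ` B")
    case True
    then obtain c0 where c0: "c0 \<in> B" "c = \<phi> c0" by auto
    have "lin_ext \<phi> (bilin_ext ov f g) c = bilin_ext ov f g c0" using lin_ext_at[OF inj H c0(1)] c0 by simp
    also have "\<dots> = (\<Sum>a\<in>?AX. \<Sum>b\<in>?AY. if ov a b = c0 then f a * g b else 0)"
      by (rule bilin_expand) (use fin in auto)
    also have "\<dots> = (\<Sum>a\<in>?AX. \<Sum>b\<in>?AY. if \<phi> (ov a b) = c then f a * g b else 0)"
    proof (intro sum.cong refl)
      fix a b assume "a \<in> ?AX" "b \<in> ?AY"
      then have "ov a b \<in> B" using fin cl by auto
      then have "(ov a b = c0) = (\<phi> (ov a b) = c)" using c0 inj by (auto simp: inj_on_def)
      then show "(if ov a b = c0 then f a * g b else 0) = (if \<phi> (ov a b) = c then f a * g b else 0)" by simp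
    qed
    finally show ?thesis using R by simp
  next
    case False
    have "lin_ext \<phi> (bilin_ext ov f g) c = 0" using lin_ext_out[OF H False] .
    moreover have "(\<Sum>a\<in>?AX. \<Sum>b\<in>?AY. if \<phi> (ov a b) = c then f a * g b else 0) = 0"
    proof (intro sum.neutral ballI)
      fix a b assume "a \<in> ?AX" "b \<in> ?AY"
      then have "ov a b \<in> B" using fin cl by auto
      then show "(if \<phi> (ov a b) = c then f a * g b else 0) = 0" using False by auto
    qed
    ultimately show ?thesis using R by simp
  qed
qed

lemma lin_iso:
  fixes ov un :: "'a \<Rightarrow> 'a \<Rightarrow> 'a" and ov' un' :: "'b \<Rightarrow> 'b \<Rightarrow> 'b"
  assumes inj: "inj_on \<phi> B" and img: "\<phi> ` B = B'"
    and cl1: "\<forall>a\<in>B. \<forall>b\<in>B. ov a b \<in> B" and cl2: "\<forall>a\<in>B. \<forall>b\<in>B. un a b \<in> B"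
    and hom1: "\<forall>a\<in>B. \<forall>b\<in>B. \<phi> (ov a b) = ov' (\<phi> a) (\<phi> b)"
    and hom2: "\<forall>a\<in>B. \<forall>b\<in>B. \<phi> (un a b) = un' (\<phi> a) (\<phi> b)"
    and A1: "assoc_L_algebra (free_on B :: ('a \<Rightarrow> 'k::field) set) (bilin_ext ov) (bilin_ext un)"
    and A2: "assoc_L_algebra (free_on B' :: ('b \<Rightarrow> 'k) set) (bilin_ext ov') (bilin_ext un')"
  shows "L_alg_iso (free_on B :: ('a \<Rightarrow> 'k) set) (bilin_ext ov) (bilin_ext un) (free_on B') (bilin_ext ov') (bilin_ext un') (lin_ext \<phi>)"
proof -
  have sub: "subspace_fun (free_on B :: ('a \<Rightarrow> 'k) set)" by (rule subspace_free)
  have at: "\<And>f a. f \<in> free_on B \<Longrightarrow> a \<in> B \<Longrightarrow> lin_ext \<phi> f (\<phi> a) = (f a :: 'k)" by (rule lin_ext_at[OF inj])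
  have out: "\<And>f c. f \<in> free_on B \<Longrightarrow> c \<notin> \<phi> ` B \<Longrightarrow> lin_ext \<phi> f c = (0::'k)" by (rule lin_ext_out)
  have bij: "bij_betw (lin_ext \<phi>) (free_on B :: ('a \<Rightarrow> 'k) set) (free_on B')"
    unfolding bij_betw_def
  proof (intro conjI)
    show "inj_on (lin_ext \<phi>) (free_on B :: ('a \<Rightarrow> 'k) set)"
    proof (rule inj_onI)
      fix f g :: "'a \<Rightarrow> 'k" assume fg: "f \<in> free_on B" "g \<in> free_on B" "lin_ext \<phi> f = lin_ext \<phi> g"
      show "f = g"
      proof
        fix a show "f a = g a"
        proof (cases "a \<in> B")
          case True then show ?thesis using at[OF fg(1) True] at[OF fg(2) True] fg(3) by simp
        next
          case False
          have "{a. f a \<noteq> 0} \<subseteq> B" "{a. g a \<noteq> 0} \<subseteq> B" using fg(1,2) by (simp_all add: free_on_iff)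
          then have "f a = 0" "g a = 0" using False by blast+
          then show ?thesis by simp
        qed
      qed
    qed
    show "lin_ext \<phi> ` (free_on B :: ('a \<Rightarrow> 'k) set) = free_on B'"
    proof
      show "lin_ext \<phi> ` (free_on B :: ('a \<Rightarrow> 'k) set) \<subseteq> free_on B'" using lin_ext_free img by blast
    next
      show "free_on B' \<subseteq> lin_ext \<phi> ` (free_on B :: ('a \<Rightarrow> 'k) set)"
      proof
        fix F :: "'b \<Rightarrow> 'k" assume F: "F \<in> free_on B'"
        define f where "f a = (if a \<in> B then F (\<phi> a) else 0)" for a
        have s1: "{a. f a \<noteq> 0} \<subseteq> B" by (auto simp: f_def)
        have s2: "\<phi> ` {a. f a \<noteq> 0} \<subseteq> {b. F b \<noteq> 0}" by (auto simp: f_def split: if_splits)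
        have "finite (\<phi> ` {a. f a \<noteq> 0})" using s2 F by (auto simp: free_on_iff intro: finite_subset)
        moreover have "inj_on \<phi> {a. f a \<noteq> 0}" using inj s1 inj_on_subset by blast
        ultimately have "finite {a. f a \<noteq> 0}" using finite_imageD by blast
        then have fB: "f \<in> free_on B" using s1 by (simp add: free_on_iff)
        have "lin_ext \<phi> f = F"
        proof
          fix c show "lin_ext \<phi> f c = F c"
          proof (cases "c \<in> \<phi> ` B")
            case True
            then obtain a where "a \<in> B" "c = \<phi> a" by auto
            then show ?thesis using at[OF fB] by (simp add: f_def)
          next
            case False
            then have "F c = 0" using F img by (auto simp: free_on_iff)
            then show ?thesis using out[OF fB False] by simp
          qed
        qed
        then show "F \<in> lin_ext \<phi> ` free_on B" using fB by blast
      qed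
    qed
  qed
  have add: "\<forall>f\<in>free_on B. \<forall>g\<in>free_on B. lin_ext \<phi> (\<lambda>x. f x + g x) = (\<lambda>y. lin_ext \<phi> f y + lin_ext \<phi> g y :: 'k)"
  proof (intro ballI ext)
    fix f g :: "'a \<Rightarrow> 'k" and c assume fg: "f \<in> free_on B" "g \<in> free_on B"
    then have fg2: "(\<lambda>x. f x + g x) \<in> free_on B" using sub by (simp add: subspace_fun_def)
    show "lin_ext \<phi> (\<lambda>x. f x + g x) c = lin_ext \<phi> f c + lin_ext \<phi> g c"
    proof (cases "c \<in> \<phi> ` B")
      case True
      then obtain a where "a \<in> B" "c = \<phi> a" by auto
      then show ?thesis using at[OF fg2] at[OF fg(1)] at[OF fg(2)] by simp
    next
      case False then show ?thesis using out[OF fg2] out[OF fg(1)] out[OF fg(2)] by simp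
    qed
  qed
  have scal: "\<forall>c. \<forall>f\<in>free_on B. lin_ext \<phi> (\<lambda>x. c * f x) = (\<lambda>y. c * lin_ext \<phi> f y :: 'k)"
  proof (intro allI ballI ext)
    fix f :: "'a \<Rightarrow> 'k" and c d assume f: "f \<in> free_on B"
    then have f2: "(\<lambda>x. c * f x) \<in> free_on B" using sub by (simp add: subspace_fun_def)
    show "lin_ext \<phi> (\<lambda>x. c * f x) d = c * lin_ext \<phi> f d"
    proof (cases "d \<in> \<phi> ` B")
      case True
      then obtain a where "a \<in> B" "d = \<phi> a" by auto
      then show ?thesis using at[OF f2] at[OF f] by simp
    next
      case False then show ?thesis using out[OF f2] out[OF f] by simp
    qed
  qed
  have h1: "\<forall>f\<in>(free_on B :: ('a \<Rightarrow> 'k) set). \<forall>g\<in>free_on B. lin_ext \<phi> (bilin_ext ov f g) = bilin_ext ov' (lin_ext \<phi> f) (lin_ext \<phi> g)"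
  proof (intro ballI)
    fix f g :: "'a \<Rightarrow> 'k" assume "f \<in> free_on B" "g \<in> free_on B"
    then show "lin_ext \<phi> (bilin_ext ov f g) = bilin_ext ov' (lin_ext \<phi> f) (lin_ext \<phi> g)"
      by (rule lin_hom[OF inj _ _ cl1 hom1])
  qed
  have h2: "\<forall>f\<in>(free_on B :: ('a \<Rightarrow> 'k) set). \<forall>g\<in>free_on B. lin_ext \<phi> (bilin_ext un f g) = bilin_ext un' (lin_ext \<phi> f) (lin_ext \<phi> g)"
  proof (intro ballI)
    fix f g :: "'a \<Rightarrow> 'k" assume "f \<in> free_on B" "g \<in> free_on B"
    then show "lin_ext \<phi> (bilin_ext un f g) = bilin_ext un' (lin_ext \<phi> f) (lin_ext \<phi> g)"
      by (rule lin_hom[OF inj _ _ cl2 hom2])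
  qed
  show ?thesis unfolding L_alg_iso_def by (intro conjI A1 A2 bij add scal h1 h2)
qed



section \<open>Moebius recursion\<close>

lemma le_vec_less_aux: "length (z::nat list) = length b \<Longrightarrow> (\<forall>i<length z. z ! i \<le> b ! i) \<Longrightarrow> z \<noteq> b \<Longrightarrow> sum_list z < sum_list b"
proof (induction z b rule: list_induct2)
  case Nil then show ?case by simp
next
  case (Cons x xs y ys)
  have xy: "x \<le> y" using Cons.prems(1) by (metis length_Cons nth_Cons_0 zero_less_Suc)
  have r: "\<forall>i<length xs. xs ! i \<le> ys ! i" using Cons.prems(1) by (metis Suc_less_eq length_Cons nth_Cons_Suc)
  have "sum_list xs \<le> sum_list ys"
  proof (cases "xs = ys")
    case True then show ?thesis by simp
  next
    case False then show ?thesis using Cons.IH r by simp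
  qed
  show ?case
  proof (cases "xs = ys")
    case True then have "x < y" using xy Cons.prems(2) by auto
    then show ?thesis using True by simp
  next
    case False then show ?thesis using Cons.IH r xy by simp
  qed
qed

lemma le_vec_less: "le_vec z b \<Longrightarrow> z \<noteq> b \<Longrightarrow> sum_list z < sum_list b"
  unfolding le_vec_def using le_vec_less_aux by blast

fun muf :: "nat list set \<Rightarrow> nat \<Rightarrow> nat list \<Rightarrow> nat list \<Rightarrow> int" where
  "muf P 0 a b = 0"
| "muf P (Suc N) a b = (if a \<in> P \<and> b \<in> P \<and> le_vec a b then (if a = b then 1 else
      - (\<Sum>z\<in>{z\<in>P. le_vec a z \<and> le_vec z b \<and> z \<noteq> b}. muf P N a z)) else 0)"

lemma muf_stable: "sum_list b < N \<Longrightarrow> sum_list b < N' \<Longrightarrow> muf P N a b = muf P N' a b"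
proof (induction N arbitrary: N' b)
  case 0 then show ?case by simp
next
  case (Suc N)
  then obtain N'' where N': "N' = Suc N''" by (cases N') auto
  have "(\<Sum>z\<in>{z\<in>P. le_vec a z \<and> le_vec z b \<and> z \<noteq> b}. muf P N a z) = (\<Sum>z\<in>{z\<in>P. le_vec a z \<and> le_vec z b \<and> z \<noteq> b}. muf P N'' a z)"
  proof (rule sum.cong[OF refl])
    fix z assume "z \<in> {z\<in>P. le_vec a z \<and> le_vec z b \<and> z \<noteq> b}"
    then have "sum_list z < sum_list b" using le_vec_less by blast
    then have "sum_list z < N" "sum_list z < N''" using Suc.prems N' by linarith+
    then show "muf P N a z = muf P N'' a z" by (rule Suc.IH)
  qed
  then show ?case using N' by simp
qed

definition mu0 :: "nat list set \<Rightarrow> nat list \<Rightarrow> nat list \<Rightarrow> int" where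
  "mu0 P a b = muf P (Suc (sum_list b)) a b"

lemma mu0_eq: "mu0 P a b = (if a \<in> P \<and> b \<in> P \<and> le_vec a b then (if a = b then 1 else
      - (\<Sum>z\<in>{z\<in>P. le_vec a z \<and> le_vec z b \<and> z \<noteq> b}. mu0 P a z)) else 0)"
proof -
  have "(\<Sum>z\<in>{z\<in>P. le_vec a z \<and> le_vec z b \<and> z \<noteq> b}. muf P (sum_list b) a z) = (\<Sum>z\<in>{z\<in>P. le_vec a z \<and> le_vec z b \<and> z \<noteq> b}. mu0 P a z)"
  proof (rule sum.cong[OF refl])
    fix z assume "z \<in> {z\<in>P. le_vec a z \<and> le_vec z b \<and> z \<noteq> b}"
    then have "sum_list z < sum_list b" using le_vec_less by blast
    then show "muf P (sum_list b) a z = mu0 P a z" unfolding mu0_def by (intro muf_stable) auto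
  qed
  then show ?thesis unfolding mu0_def[of P a b] by simp
qed

lemma mobius_mu0: "mobius P le_vec = mu0 P"
  unfolding mobius_def
proof (rule the_equality)
  show "\<forall>a b. mu0 P a b = (if a \<in> P \<and> b \<in> P \<and> le_vec a b then (if a = b then 1 else
      - (\<Sum>z\<in>{z\<in>P. le_vec a z \<and> le_vec z b \<and> z \<noteq> b}. mu0 P a z)) else 0)"
    using mu0_eq by blast
next
  fix f :: "nat list \<Rightarrow> nat list \<Rightarrow> int" assume f: "\<forall>a b. f a b = (if a \<in> P \<and> b \<in> P \<and> le_vec a b then (if a = b then 1 else
      - (\<Sum>z\<in>{z\<in>P. le_vec a z \<and> le_vec z b \<and> z \<noteq> b}. f a z)) else 0)"
  have "\<forall>b. sum_list b < N \<longrightarrow> f a b = mu0 P a b" for N a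
  proof (induction N)
    case 0 then show ?case by simp
  next
    case (Suc N)
    show ?case
    proof (intro allI impI)
      fix b assume b: "sum_list b < Suc N"
      have "(\<Sum>z\<in>{z\<in>P. le_vec a z \<and> le_vec z b \<and> z \<noteq> b}. f a z) = (\<Sum>z\<in>{z\<in>P. le_vec a z \<and> le_vec z b \<and> z \<noteq> b}. mu0 P a z)"
      proof (rule sum.cong[OF refl])
        fix z assume "z \<in> {z\<in>P. le_vec a z \<and> le_vec z b \<and> z \<noteq> b}"
        then have "sum_list z < N" using le_vec_less b by fastforce
        then show "f a z = mu0 P a z" using Suc.IH by blast
      qed
      note sumEq = this
      have fe: "f a b = (if a \<in> P \<and> b \<in> P \<and> le_vec a b then (if a = b then 1 else
          - (\<Sum>z\<in>{z\<in>P. le_vec a z \<and> le_vec z b \<and> z \<noteq> b}. f a z)) else 0)" using f by blast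
      show "f a b = mu0 P a b" by (simp only: fe mu0_eq[of P a b] sumEq)
    qed
  qed
  then show "f = mu0 P" by (intro ext) blast
qed

lemma mobius_eq: "mobius P le_vec a b = (if a \<in> P \<and> b \<in> P \<and> le_vec a b then (if a = b then 1 else
      - (\<Sum>z\<in>{z\<in>P. le_vec a z \<and> le_vec z b \<and> z \<noteq> b}. mobius P le_vec a z)) else 0)"
  unfolding mobius_mu0 by (rule mu0_eq)

section \<open>Names\<close>

lemma Nhat_iff: "v \<in> Nhat n \<longleftrightarrow> (\<exists>t. internal t = n \<and> v = nm t 1)"
  by (auto simp: Nhat_def Y_def name_nm)

lemma Nhat_length: "v \<in> Nhat n \<Longrightarrow> length v = n"
  by (auto simp: Nhat_iff)

lemma Nhat_bounds: "v \<in> Nhat n \<Longrightarrow> p < n \<Longrightarrow> 1 \<le> v ! p \<and> v ! p \<le> Suc p"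
  using nm_bounds[of p _ 1] by (auto simp: Nhat_iff)

lemma Nhat_pos: "v \<in> Nhat n \<Longrightarrow> a \<in> set v \<Longrightarrow> 1 \<le> a"
  using Nhat_bounds Nhat_length by (metis in_set_conv_nth)

lemma name_over: "name (over p t) = over_name (name p) (name t)"
  by (simp add: name_nm nm_over over_name_def tri_def)

lemma name_under: "name (under p t) = under_name (name p) (name t)"
  by (simp add: name_nm nm_under under_name_def)

lemma A_in_Nhat: "length z = n \<Longrightarrow> (\<forall>p<n. z ! p = 1 \<or> z ! p = Suc p) \<Longrightarrow> z \<in> Nhat n"
proof (induction n arbitrary: z)
  case 0 then show ?case by (auto simp: Nhat_iff intro: exI[of _ Leaf])
next
  case (Suc n)
  have zt: "take n z \<in> Nhat n" using Suc.prems by (intro Suc.IH) auto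
  then obtain t where t: "internal t = n" "take n z = nm t 1" by (auto simp: Nhat_iff)
  have z: "z = take n z @ [z ! n]" using Suc.prems(1)
    by (metis lessI take_Suc_conv_app_nth take_all order_refl)
  consider "z ! n = 1" | "z ! n = Suc n" using Suc.prems by blast
  then show ?case
  proof cases
    case 1
    have "nm (over t (Node Leaf Leaf)) 1 = z" using t 1 z by (simp add: nm_over)
    then show ?thesis using t by (auto simp: Nhat_iff intro!: exI[of _ "over t (Node Leaf Leaf)"])
  next
    case 2
    have "nm (under t (Node Leaf Leaf)) 1 = z" using t 2 z by (simp add: nm_under)
    then show ?thesis using t by (auto simp: Nhat_iff intro!: exI[of _ "under t (Node Leaf Leaf)"])
  qed
qed

section \<open>The explicit Moebius function\<close>

definition gM :: "nat \<Rightarrow> nat \<Rightarrow> int" where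
  "gM p a = (if a = 1 then 1 else if a = Suc p then -1 else 0)"

fun Fk :: "nat \<Rightarrow> nat list \<Rightarrow> int" where
  "Fk k [] = 1"
| "Fk k (a # xs) = gM k a * Fk (Suc k) xs"

lemma Fk_append: "Fk k (xs @ ys) = Fk k xs * Fk (k + length xs) ys"
  by (induction xs arbitrary: k) auto

lemma Fk_prod: "Fk k xs = (\<Prod>p<length xs. gM (k + p) (xs ! p))"
proof (induction xs arbitrary: k)
  case Nil then show ?case by simp
next
  case (Cons a xs)
  then show ?case by (simp add: prod.lessThan_Suc_shift del: prod.lessThan_Suc)
qed

lemma Fk_over: "\<forall>a\<in>set w. 1 \<le> a \<Longrightarrow> Fk (n + k) (map (tri n) w) = Fk k w"
proof (induction w arbitrary: k)
  case Nil then show ?case by simp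
next
  case (Cons a w)
  have "gM (n + k) (tri n a) = gM k a" using Cons.prems by (auto simp: gM_def tri_def)
  moreover have "Fk (Suc (n + k)) (map (tri n) w) = Fk (Suc k) w" using Cons by (metis add_Suc_right list.set_intros(2))
  ultimately show ?case by simp
qed

lemma Fk_under: "1 \<le> n \<Longrightarrow> \<forall>a\<in>set w. 1 \<le> a \<Longrightarrow>
  Fk (n + k) (map (\<lambda>a. a + n) w) = (if w = [Suc k..<Suc k + length w] then (-1) ^ length w else 0)"
proof (induction w arbitrary: k)
  case Nil then show ?case by simp
next
  case (Cons a w)
  have g: "gM (n + k) (a + n) = (if a = Suc k then -1 else 0)" using Cons.prems by (auto simp: gM_def)
  have IH: "Fk (Suc (n + k)) (map (\<lambda>a. a + n) w) = (if w = [Suc (Suc k)..<Suc (Suc k) + length w] then (-1) ^ length w else 0)"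
    using Cons.IH[of "Suc k"] Cons.prems by simp
  have e: "Suc k + length (a # w) = Suc (Suc k) + length w" by simp
  have u: "[Suc k..<Suc k + length (a # w)] = Suc k # [Suc (Suc k)..<Suc (Suc k) + length w]"
    unfolding e by (rule upt_conv_Cons) simp
  show ?case
  proof (cases "a = Suc k")
    case True then show ?thesis using g IH u by simp
  next
    case False then show ?thesis using g u by simp
  qed
qed

lemma Fk_rep: "Fk k (replicate n 1) = 1"
  by (induction n arbitrary: k) (auto simp: gM_def)

lemma Fk_rep': "Fk k (replicate n (Suc 0)) = 1"
  by (induction n arbitrary: k) (auto simp: gM_def)

lemma sum_pow_alt: "finite D \<Longrightarrow> D \<noteq> {} \<Longrightarrow> (\<Sum>S\<in>Pow D. (-1::int) ^ card S) = 0"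
proof -
  assume D: "finite D" "D \<noteq> {}"
  then obtain x where x: "x \<in> D" by auto
  define E where "E = D - {x}"
  have DE: "D = insert x E" "x \<notin> E" "finite E" using x D by (auto simp: E_def)
  have disj: "Pow E \<inter> insert x ` Pow E = {}" using DE(2) by auto
  have inj: "inj_on (insert x) (Pow E)" using DE(2) by (auto simp: inj_on_def)
  have "(\<Sum>S\<in>Pow D. (-1::int) ^ card S) = (\<Sum>S\<in>Pow E. (-1::int) ^ card S) + (\<Sum>S\<in>insert x ` Pow E. (-1::int) ^ card S)"
    unfolding DE(1) Pow_insert using DE(3) disj by (intro sum.union_disjoint) auto
  also have "(\<Sum>S\<in>insert x ` Pow E. (-1::int) ^ card S) = (\<Sum>S\<in>Pow E. (-1::int) ^ card (insert x S))"
    by (rule sum.reindex[OF inj, unfolded comp_def])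
  also have "\<dots> = (\<Sum>S\<in>Pow E. - ((-1::int) ^ card S))"
  proof (rule sum.cong[OF refl])
    fix S assume "S \<in> Pow E"
    then have "finite S" "x \<notin> S" using DE by (auto intro: finite_subset)
    then show "(-1::int) ^ card (insert x S) = - ((-1) ^ card S)" by simp
  qed
  finally show ?thesis by (simp add: sum_negf)
qed



lemma Nhat_le_finite: "finite {z \<in> Nhat n. le_vec z v}"
proof -
  have "{z \<in> Nhat n. le_vec z v} \<subseteq> {z. set z \<subseteq> {..sum_list v} \<and> length z = length v}"
  proof (clarify, intro conjI subsetI)
    fix z x assume z: "z \<in> Nhat n" "le_vec z v" "x \<in> set z"
    then obtain i where i: "i < length z" "z ! i = x" by (auto simp: in_set_conv_nth)
    have "z ! i \<le> v ! i" "i < length v" using z(2) i by (auto simp: le_vec_def)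
    moreover have "v ! i \<le> sum_list v" using \<open>i < length v\<close> by (simp add: member_le_sum_list)
    ultimately show "x \<in> {..sum_list v}" using i by simp
  next
    fix z assume "le_vec z v" then show "length z = length v" by (simp add: le_vec_def)
  qed
  moreover have "finite {z. set z \<subseteq> {..sum_list v} \<and> length z = length v}"
    by (rule finite_lists_length_eq) simp
  ultimately show ?thesis by (rule finite_subset)
qed

lemma key_sum:
  assumes v: "v \<in> Nhat n" and nv: "v \<noteq> replicate n 1"
  shows "(\<Sum>z\<in>{z \<in> Nhat n. le_vec z v}. Fk 0 z) = 0"
proof -
  have lv: "length v = n" using Nhat_length[OF v] .
  define D where "D = {p. 0 < p \<and> p < n \<and> v ! p = Suc p}"
  define zS where "zS S = map (\<lambda>p. if p \<in> S then Suc p else 1) [0..<n]" for S :: "nat set"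
  define Bs where "Bs = {z. length z = n \<and> (\<forall>p<n. z ! p = 1 \<or> z ! p = Suc p) \<and> le_vec z v}"
  have finD: "finite D" by (simp add: D_def)
  have Dne: "D \<noteq> {}"
  proof
    assume "D = {}"
    obtain t where t: "internal t = n" "v = nm t 1" using v by (auto simp: Nhat_iff)
    have "nm t 1 = replicate (internal t) 1"
    proof (rule nm_leftcomb)
      fix p assume "0 < p" "p < internal t"
      then show "nm t 1 ! p \<noteq> 1 + p" using \<open>D = {}\<close> t by (auto simp: D_def)
    qed
    then show False using nv t by simp
  qed
  have BsSub: "Bs \<subseteq> {z \<in> Nhat n. le_vec z v}" using A_in_Nhat by (auto simp: Bs_def)
  have zero: "Fk 0 z = 0" if "z \<in> {z \<in> Nhat n. le_vec z v} - Bs" for z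
  proof -
    have lz: "length z = n" using that Nhat_length by auto
    have "\<not> (\<forall>p<n. z ! p = 1 \<or> z ! p = Suc p)" using that lz by (auto simp: Bs_def)
    then obtain p where p: "p < n" "z ! p \<noteq> 1" "z ! p \<noteq> Suc p" by blast
    then have "gM p (z ! p) = 0" by (simp add: gM_def)
    then show ?thesis unfolding Fk_prod using p lz by (auto intro!: prod_zero)
  qed
  have "(\<Sum>z\<in>{z \<in> Nhat n. le_vec z v}. Fk 0 z) = (\<Sum>z\<in>Bs. Fk 0 z)"
    by (rule sum.mono_neutral_right) (use Nhat_le_finite BsSub zero in auto)
  also have "Bs = zS ` Pow D"
  proof
    show "zS ` Pow D \<subseteq> Bs"
    proof
      fix z assume "z \<in> zS ` Pow D"
      then obtain S where S: "S \<subseteq> D" "z = zS S" by auto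
      have "le_vec z v" unfolding le_vec_def
      proof (intro conjI allI impI)
        show "length z = length v" using S lv by (simp add: zS_def)
        fix i assume "i < length z"
        then have i: "i < n" using S by (simp add: zS_def)
        show "z ! i \<le> v ! i"
        proof (cases "i \<in> S")
          case True then show ?thesis using S i by (auto simp: zS_def D_def)
        next
          case False then show ?thesis using S i Nhat_bounds[OF v i] by (simp add: zS_def)
        qed
      qed
      then show "z \<in> Bs" using S by (auto simp: Bs_def zS_def)
    qed
  next
    show "Bs \<subseteq> zS ` Pow D"
    proof
      fix z assume z: "z \<in> Bs"
      define S where "S = {p. 0 < p \<and> p < n \<and> z ! p = Suc p}"
      have SD: "S \<subseteq> D"
      proof
        fix p assume "p \<in> S"
        then have p: "0 < p" "p < n" "z ! p = Suc p" by (auto simp: S_def)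
        have "z ! p \<le> v ! p" using z p lv by (auto simp: Bs_def le_vec_def)
        then show "p \<in> D" using Nhat_bounds[OF v p(2)] p by (auto simp: D_def)
      qed
      have "z = zS S"
      proof (rule nth_equalityI)
        show "length z = length (zS S)" using z by (simp add: Bs_def zS_def)
        fix i assume "i < length z"
        then have i: "i < n" using z by (simp add: Bs_def)
        show "z ! i = zS S ! i" using z i by (cases "i = 0") (auto simp: zS_def S_def Bs_def)
      qed
      then show "z \<in> zS ` Pow D" using SD by auto
    qed
  qed
  also have "(\<Sum>z\<in>zS ` Pow D. Fk 0 z) = (\<Sum>S\<in>Pow D. Fk 0 (zS S))"
  proof (rule sum.reindex[unfolded comp_def])
    show "inj_on zS (Pow D)"
    proof (rule inj_onI)
      fix S S' assume SS: "S \<in> Pow D" "S' \<in> Pow D" "zS S = zS S'"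
      show "S = S'"
      proof (intro set_eqI iffI)
        fix p assume "p \<in> S"
        then have p: "0 < p" "p < n" "p \<in> D" using SS by (auto simp: D_def)
        have "zS S ! p = Suc p" using p \<open>p \<in> S\<close> by (simp add: zS_def)
        then show "p \<in> S'" using SS(3) p by (auto simp: zS_def split: if_splits)
      next
        fix p assume "p \<in> S'"
        then have p: "0 < p" "p < n" "p \<in> D" using SS by (auto simp: D_def)
        have "zS S' ! p = Suc p" using p \<open>p \<in> S'\<close> by (simp add: zS_def)
        then show "p \<in> S" using SS(3) p by (auto simp: zS_def split: if_splits)
      qed
    qed
  qed
  also have "\<dots> = (\<Sum>S\<in>Pow D. (-1::int) ^ card S)"
  proof (rule sum.cong[OF refl])
    fix S assume "S \<in> Pow D"
    then have S: "S \<subseteq> D" by simp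
    have "Fk 0 (zS S) = (\<Prod>p<n. gM p (zS S ! p))" by (simp add: Fk_prod zS_def)
    also have "\<dots> = (\<Prod>p<n. if p \<in> S then -1 else 1)"
    proof (rule prod.cong[OF refl])
      fix p assume "p \<in> {..<n}"
      then show "gM p (zS S ! p) = (if p \<in> S then -1 else 1)" using S by (auto simp: zS_def gM_def D_def)
    qed
    also have "\<dots> = (\<Prod>p\<in>{p\<in>{..<n}. p \<in> S}. -1)"
      by (rule prod.inter_filter[of "{..<n}" "\<lambda>_. -1::int" "\<lambda>p. p \<in> S", symmetric]) simp
    also have "{p\<in>{..<n}. p \<in> S} = S" using S by (auto simp: D_def)
    finally show "Fk 0 (zS S) = (-1) ^ card S" by simp
  qed
  also have "\<dots> = 0" by (rule sum_pow_alt[OF finD Dne])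
  finally show ?thesis .
qed

lemma M_Fk: "v \<in> Nhat n \<Longrightarrow> M v = Fk 0 v"
proof (induction "sum_list v" arbitrary: v rule: less_induct)
  case less
  have lv: "length v = n" using Nhat_length[OF less.prems] .
  let ?one = "replicate n 1"
  have one: "?one \<in> Nhat n" by (rule A_in_Nhat) auto
  have le1: "le_vec ?one z" if "z \<in> Nhat n" for z
    using Nhat_bounds[OF that] Nhat_length[OF that] by (auto simp: le_vec_def)
  have Mv: "M v = mobius (Nhat n) le_vec ?one v" by (simp add: M_def lv)
  show ?case
  proof (cases "v = ?one")
    case True
    then show ?thesis using Mv mobius_eq[of "Nhat n" ?one ?one] one le1[OF one] by (simp add: Fk_rep Fk_rep')
  next
    case False
    have S: "{z\<in>Nhat n. le_vec ?one z \<and> le_vec z v \<and> z \<noteq> v} = {z\<in>Nhat n. le_vec z v} - {v}"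
      using le1 by auto
    have IH: "mobius (Nhat n) le_vec ?one z = Fk 0 z" if "z \<in> {z\<in>Nhat n. le_vec z v} - {v}" for z
    proof -
      have "sum_list z < sum_list v" using that le_vec_less by auto
      then have "M z = Fk 0 z" using less.hyps that by auto
      moreover have "length z = n" using that Nhat_length by auto
      ultimately show ?thesis by (simp add: M_def)
    qed
    have vin: "v \<in> {z\<in>Nhat n. le_vec z v}" using less.prems lv by (simp add: le_vec_def)
    have "M v = - (\<Sum>z\<in>{z\<in>Nhat n. le_vec z v} - {v}. mobius (Nhat n) le_vec ?one z)"
      using Mv mobius_eq[of "Nhat n" ?one v] one less.prems le1[OF less.prems] False S by simp
    also have "\<dots> = - (\<Sum>z\<in>{z\<in>Nhat n. le_vec z v} - {v}. Fk 0 z)"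
      using IH by simp
    also have "(\<Sum>z\<in>{z\<in>Nhat n. le_vec z v} - {v}. Fk 0 z) = (\<Sum>z\<in>{z\<in>Nhat n. le_vec z v}. Fk 0 z) - Fk 0 v"
      using vin by (simp add: sum_diff1[OF Nhat_le_finite])
    also have "(\<Sum>z\<in>{z\<in>Nhat n. le_vec z v}. Fk 0 z) = 0" using key_sum[OF less.prems] False lv by simp
    finally show ?thesis by simp
  qed
qed



lemma Nhat_name: "v \<in> Nhat n \<longleftrightarrow> (\<exists>p. internal p = n \<and> v = name p)"
  by (auto simp: Nhat_def Y_def)

lemma NhatAll_eq: "NhatAll = name ` {t. 1 \<le> internal t}"
  by (auto simp: NhatAll_def Nhat_def Y_def)

lemma NhatAll_props: "u \<in> NhatAll \<Longrightarrow> 1 \<le> length u \<and> (\<forall>a\<in>set u. 1 \<le> a)"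
  unfolding NhatAll_def using Nhat_length Nhat_pos by fastforce

lemma tri_tri: "1 \<le> a \<Longrightarrow> tri x (tri y a) = tri (x + y) a"
  by (simp add: tri_def)

lemma over_name_assoc: "\<forall>a\<in>set w. 1 \<le> a \<Longrightarrow> over_name (over_name u v) w = over_name u (over_name v w)"
  by (simp add: over_name_def tri_tri add.commute)

lemma under_name_assoc: "under_name (under_name u v) w = under_name u (under_name v w)"
  by (simp add: under_name_def add.assoc add.commute)

lemma mixed_name: "\<forall>a\<in>set w. 1 \<le> a \<Longrightarrow> 1 \<le> length v \<Longrightarrow> under_name (over_name u v) w = over_name u (under_name v w)"
  by (auto simp: over_name_def under_name_def tri_def)

lemma over_assoc_tree: "over (over p t) s = over p (over t s)"
  by (induction s) auto

lemma under_assoc_tree: "under (under p t) s = under p (under t s)"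
  by (induction p) auto

lemma mixed_tree: "t \<noteq> Leaf \<Longrightarrow> under (over p t) s = over p (under t s)"
  by (cases t) auto

lemma mixed_tree': "1 \<le> internal t \<Longrightarrow> under (over p t) s = over p (under t s)"
  by (cases t) auto

lemma name_inj: "inj_on name B"
  by (rule inj_onI) (simp add: name_nm nm_inj)

lemma part_i1: "1 \<le> n \<Longrightarrow> 1 \<le> m \<Longrightarrow> v \<in> Nhat n \<Longrightarrow> w \<in> Nhat m \<Longrightarrow>
       over_name v w \<in> Nhat (n + m) \<and> under_name v w \<in> Nhat (n + m)"
proof -
  assume "v \<in> Nhat n" "w \<in> Nhat m"
  then obtain p t where "internal p = n" "v = name p" "internal t = m" "w = name t" by (auto simp: Nhat_name)
  then have "over_name v w = name (over p t)" "under_name v w = name (under p t)"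
    "internal (over p t) = n + m" "internal (under p t) = n + m"
    using name_over[of p t] name_under[of p t] by auto
  then show ?thesis unfolding Nhat_name by blast
qed

lemma NhatAll_closed: "u \<in> NhatAll \<Longrightarrow> v \<in> NhatAll \<Longrightarrow> over_name u v \<in> NhatAll \<and> under_name u v \<in> NhatAll"
proof -
  assume "u \<in> NhatAll" "v \<in> NhatAll"
  then obtain p t where "1 \<le> internal p" "u = name p" "1 \<le> internal t" "v = name t" by (auto simp: NhatAll_eq)
  then have "over_name u v = name (over p t)" "under_name u v = name (under p t)"
    "1 \<le> internal (over p t)" "1 \<le> internal (under p t)"
    using name_over[of p t] name_under[of p t] by auto
  then show ?thesis unfolding NhatAll_eq by auto
qed

lemma laws_names: "\<forall>u\<in>NhatAll. \<forall>v\<in>NhatAll. \<forall>w\<in>NhatAll.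
       over_name (over_name u v) w = over_name u (over_name v w) \<and>
       under_name (under_name u v) w = under_name u (under_name v w) \<and>
       under_name (over_name u v) w = over_name u (under_name v w)"
  using NhatAll_props over_name_assoc under_name_assoc mixed_name by blast

lemma alg_names: "assoc_L_algebra (free_on NhatAll :: (nat list \<Rightarrow> 'k::field) set)
       (bilin_ext over_name) (bilin_ext under_name)"
  by (rule assoc_L_free) (use NhatAll_closed laws_names in auto)

lemma alg_trees: "assoc_L_algebra (free_on {t. 1 \<le> internal t} :: (tree \<Rightarrow> 'k::field) set)
       (bilin_ext over) (bilin_ext under)"
  by (rule assoc_L_free) (auto simp: over_assoc_tree under_assoc_tree mixed_tree')

lemma iso: "L_alg_iso (free_on {t. 1 \<le> internal t} :: (tree \<Rightarrow> 'k::field) set)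
       (bilin_ext over) (bilin_ext under)
       (free_on NhatAll) (bilin_ext over_name) (bilin_ext under_name)
       (lin_ext name)"
  by (rule lin_iso[OF name_inj NhatAll_eq[symmetric] _ _ _ _ alg_trees alg_names])
     (auto simp: name_over name_under)

lemma part_iii: "1 \<le> n \<Longrightarrow> 1 \<le> m \<Longrightarrow> v \<in> Nhat n \<Longrightarrow> w \<in> Nhat m \<Longrightarrow>
       M (over_name v w) = M v * M w \<and>
       M (under_name v w) = (if w = [1..<m + 1] then (-1) ^ m * M v else 0)"
proof -
  assume a: "1 \<le> n" "1 \<le> m" "v \<in> Nhat n" "w \<in> Nhat m"
  have lv: "length v = n" and lw: "length w = m" using a Nhat_length by auto
  have pos: "\<forall>x\<in>set w. 1 \<le> x" using a(4) Nhat_pos by blast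
  have o: "over_name v w \<in> Nhat (n + m)" and u: "under_name v w \<in> Nhat (n + m)" using part_i1[OF a] by auto
  have "M (over_name v w) = Fk 0 v * Fk (n + 0) (map (tri n) w)"
    using M_Fk[OF o] by (simp add: over_name_def Fk_append lv)
  also have "\<dots> = M v * M w" using Fk_over[OF pos, of n 0] M_Fk[OF a(3)] M_Fk[OF a(4)] by simp
  finally have 1: "M (over_name v w) = M v * M w" .
  have "M (under_name v w) = Fk 0 v * Fk (n + 0) (map (\<lambda>a. a + n) w)"
    using M_Fk[OF u] by (simp add: under_name_def Fk_append lv)
  also have "\<dots> = (if w = [1..<m + 1] then (-1) ^ m * M v else 0)"
  proof -
    have U: "Fk (n + 0) (map (\<lambda>a. a + n) w) = (if w = [1..<m + 1] then (-1) ^ m else 0)"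
      using Fk_under[OF a(1) pos, of 0] lw by (simp del: upt_Suc add: add.commute)
    show ?thesis unfolding U using M_Fk[OF a(3)] by simp
  qed
  finally show ?thesis using 1 by simp
qed

theorem mainTheorem6:
  shows
  \<comment> \<open>(i)\<close>
  "(\<forall>n m v w. 1 \<le> n \<longrightarrow> 1 \<le> m \<longrightarrow> v \<in> Nhat n \<longrightarrow> w \<in> Nhat m \<longrightarrow>
       over_name v w \<in> Nhat (n + m) \<and> under_name v w \<in> Nhat (n + m))
   \<and> (\<forall>p t. 1 \<le> internal p \<longrightarrow> 1 \<le> internal t \<longrightarrow>
       name (over p t) = over_name (name p) (name t) \<and>
       name (under p t) = under_name (name p) (name t))
  \<comment> \<open>(ii)\<close>
   \<and> (\<forall>u\<in>NhatAll. \<forall>v\<in>NhatAll. \<forall>w\<in>NhatAll.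
       over_name (over_name u v) w = over_name u (over_name v w) \<and>
       under_name (under_name u v) w = under_name u (under_name v w) \<and>
       under_name (over_name u v) w = over_name u (under_name v w))
   \<and> assoc_L_algebra (free_on NhatAll :: (nat list \<Rightarrow> 'k::field_char_0) set)
       (bilin_ext over_name) (bilin_ext under_name)
   \<and> L_alg_iso (free_on {t. 1 \<le> internal t} :: (tree \<Rightarrow> 'k) set)
       (bilin_ext over) (bilin_ext under)
       (free_on NhatAll) (bilin_ext over_name) (bilin_ext under_name)
       (lin_ext name)
  \<comment> \<open>(iii)\<close>
   \<and> (\<forall>n m v w. 1 \<le> n \<longrightarrow> 1 \<le> m \<longrightarrow> v \<in> Nhat n \<longrightarrow> w \<in> Nhat m \<longrightarrow>
       M (over_name v w) = M v * M w \<and>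
       M (under_name v w) = (if w = [1..<m + 1] then (-1) ^ m * M v else 0))"
proof (intro conjI allI impI)
  fix n m v w assume "1 \<le> n" "1 \<le> m" "v \<in> Nhat n" "w \<in> Nhat m"
  then show "over_name v w \<in> Nhat (n + m)" "under_name v w \<in> Nhat (n + m)" using part_i1 by auto
next
  fix p t show "name (over p t) = over_name (name p) (name t)" by (rule name_over)
  show "name (under p t) = under_name (name p) (name t)" by (rule name_under)
next
  show "\<forall>u\<in>NhatAll. \<forall>v\<in>NhatAll. \<forall>w\<in>NhatAll.
       over_name (over_name u v) w = over_name u (over_name v w) \<and>
       under_name (under_name u v) w = under_name u (under_name v w) \<and>
       under_name (over_name u v) w = over_name u (under_name v w)" by (rule laws_names)
next
  show "assoc_L_algebra (free_on NhatAll :: (nat list \<Rightarrow> 'k::field_char_0) set)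
       (bilin_ext over_name) (bilin_ext under_name)" by (rule alg_names)
next
  show "L_alg_iso (free_on {t. 1 \<le> internal t} :: (tree \<Rightarrow> 'k) set)
       (bilin_ext over) (bilin_ext under)
       (free_on NhatAll) (bilin_ext over_name) (bilin_ext under_name)
       (lin_ext name)" by (rule iso)
next
  fix n m v w assume a: "1 \<le> n" "1 \<le> m" "v \<in> Nhat n" "w \<in> Nhat m"
  show "M (over_name v w) = M v * M w" using part_iii[OF a] by simp
  show "M (under_name v w) = (if w = [1..<m + 1] then (-1) ^ m * M v else 0)" using part_iii[OF a] by simp
qed


end
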